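(* Let $A\subseteq\mathbb{Z}^n$ be finite with $\operatorname{conv}(A)$ of dimension $n$. A polynomial $f\in\mathbb{R}[t^{\pm1}]_A$ is strictly $A$-copositive if and only if both (i) $f_{\mathrm{cox}}(x)\ge0$ for all $x\in\mathbb{R}^r_{\ge0}$, and (ii) $\{x\in\mathbb{R}^r_{\ge0}: f_{\mathrm{cox}}(x)=0\}=Z_A\cap\mathbb{R}^r_{\ge0}$.
   Context: Cox setup: $\Sigma_A$ inner normal fan of $\operatorname{conv}(A)$, rays $1,\dots,r$ with primitive generators $F_i$ forming the columns of $F\in\mathbb{Z}^{n\times r}$, $b\in\mathbb{Z}^r$ with $\operatorname{conv}(A)=\{a:F^\top a+b\ge0\}$, $f_{\mathrm{cox}}=\sum_ac_ax^{F^\top a+b}$ for $f=\sum_ac_at^a$. $B(A)=\langle\prod_{i\notin\sigma}x_i:\sigma$ maximal cone of $\Sigma_A\rangle$ and $Z_A$ is its complex vanishing locus. With $A=\{a_1,\dots,a_m\}$, let $Y_{\hat A}$ be the Zariski closure in $\mathbb{C}^m$ of $\{(ut^{a_1},\dots,ut^{a_m}):(u,t)\in(\mathbb{C}^* )^{n+1}\}$; $f$ is strictly $A$-copositive if the linear form $y\mapsto\sum_j c_{a_j}y_j$ is positive on $Y_{\hat A}\cap\mathbb{R}^m_{\ge0}\setminus\{0\}$ (equivalently, $f$ is in the interior of the cone of $g\in\mathbb{R}[t^{\pm1}]_A$ with $g\ge0$ on $\mathbb{R}^n_{>0}$). *)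

theory Defs
  imports "HOL-Analysis.Analysis"
begin

definition realv :: "int^'n \<Rightarrow> real^'n" where
  "realv a = (\<chi> i. of_int (a $ i))"

definition convA :: "(int^'n) set \<Rightarrow> (real^'n) set" where
  "convA A = convex hull (realv ` A)"

definition inner_normal_cone :: "(real^'n) set \<Rightarrow> (real^'n) set \<Rightarrow> (real^'n) set" where
  "inner_normal_cone P G = {u. \<forall>y\<in>G. \<forall>x\<in>P. u \<bullet> y \<le> u \<bullet> x}"

definition normal_fan :: "(int^'n) set \<Rightarrow> (real^'n) set set" where
  "normal_fan A = {inner_normal_cone (convA A) G | G. G face_of convA A \<and> G \<noteq> {}}"

text \<open>Rays (one-dimensional cones) of Sigma_A; they index the Cox variables x_rho.\<close>
definition fan_rays :: "(int^'n) set \<Rightarrow> (real^'n) set set" where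
  "fan_rays A = {\<sigma> \<in> normal_fan A. aff_dim \<sigma> = 1}"

definition max_cones :: "(int^'n) set \<Rightarrow> (real^'n) set set" where
  "max_cones A = {\<sigma> \<in> normal_fan A. \<forall>\<tau>\<in>normal_fan A. \<sigma> \<subseteq> \<tau> \<longrightarrow> \<tau> = \<sigma>}"

definition prim_gen :: "(real^'n) set \<Rightarrow> int^'n \<Rightarrow> bool" where
  "prim_gen \<rho> v \<longleftrightarrow> v \<noteq> 0 \<and> realv v \<in> \<rho> \<and>
     (\<forall>w. w \<noteq> 0 \<and> realv w \<in> \<rho> \<longrightarrow> (\<exists>k::int. k \<ge> 1 \<and> w = k *s v))"

definition idot :: "int^'n \<Rightarrow> int^'n \<Rightarrow> int" where
  "idot u a = (\<Sum>i\<in>UNIV. u $ i * a $ i)"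

text \<open>R^r_{>=0}, coordinates indexed by the rays (extensional: zero off the rays).\<close>
definition nonneg_orthant :: "(int^'n) set \<Rightarrow> ((real^'n) set \<Rightarrow> real) set" where
  "nonneg_orthant A = {x. (\<forall>\<rho>\<in>fan_rays A. x \<rho> \<ge> 0) \<and> (\<forall>\<rho>. \<rho> \<notin> fan_rays A \<longrightarrow> x \<rho> = 0)}"

text \<open>Cox homogenisation f_cox = sum_a c_a x^(F^T a + b) of f = sum_{a in A} c_a t^a.
  The exponents F^T a + b are nonnegative for a in A (since A is contained in conv(A)).\<close>
definition f_cox :: "(int^'n) set \<Rightarrow> ((real^'n) set \<Rightarrow> int^'n) \<Rightarrow> ((real^'n) set \<Rightarrow> int)
     \<Rightarrow> (int^'n \<Rightarrow> real) \<Rightarrow> ((real^'n) set \<Rightarrow> real) \<Rightarrow> real" where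
  "f_cox A F b c x = (\<Sum>a\<in>A. c a * (\<Prod>\<rho>\<in>fan_rays A. x \<rho> ^ nat (idot (F \<rho>) a + b \<rho>)))"

text \<open>Z_A: complex vanishing locus of B(A) = < prod_{rho not in sigma} x_rho : sigma maximal cone >,
  i.e. the common zeros of the generators.\<close>
definition Z_A :: "(int^'n) set \<Rightarrow> ((real^'n) set \<Rightarrow> complex) set" where
  "Z_A A = {x. \<forall>\<sigma>\<in>max_cones A. (\<Prod>\<rho>\<in>{\<rho>\<in>fan_rays A. \<not> \<rho> \<subseteq> \<sigma>}. x \<rho>) = 0}"

inductive_set polyfun :: "'a set \<Rightarrow> (('a \<Rightarrow> complex) \<Rightarrow> complex) set" for A where
  pconst: "(\<lambda>y. c) \<in> polyfun A"
| pvar: "a \<in> A \<Longrightarrow> (\<lambda>y. y a) \<in> polyfun A"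
| padd: "p \<in> polyfun A \<Longrightarrow> q \<in> polyfun A \<Longrightarrow> (\<lambda>y. p y + q y) \<in> polyfun A"
| pmult: "p \<in> polyfun A \<Longrightarrow> q \<in> polyfun A \<Longrightarrow> (\<lambda>y. p y * q y) \<in> polyfun A"

text \<open>Points of C^A are functions vanishing outside A. Zariski closure in C^A.\<close>
definition zariski_closure :: "'a set \<Rightarrow> ('a \<Rightarrow> complex) set \<Rightarrow> ('a \<Rightarrow> complex) set" where
  "zariski_closure A S = {y. (\<forall>a. a \<notin> A \<longrightarrow> y a = 0) \<and>
     (\<forall>p\<in>polyfun A. (\<forall>s\<in>S. p s = 0) \<longrightarrow> p y = 0)}"

definition lmono :: "complex^'n \<Rightarrow> int^'n \<Rightarrow> complex" where
  "lmono t a = (\<Prod>i\<in>UNIV. (t $ i) powi (a $ i))"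

definition Y_hat :: "(int^'n) set \<Rightarrow> (int^'n \<Rightarrow> complex) set" where
  "Y_hat A = zariski_closure A
     {y. \<exists>u t. u \<noteq> 0 \<and> (\<forall>i. t $ i \<noteq> 0) \<and> y = (\<lambda>a. if a \<in> A then u * lmono t a else 0)}"

definition strictly_A_copositive :: "(int^'n) set \<Rightarrow> (int^'n \<Rightarrow> real) \<Rightarrow> bool" where
  "strictly_A_copositive A c \<longleftrightarrow>
     (\<forall>y\<in>Y_hat A. (\<forall>a\<in>A. Im (y a) = 0 \<and> Re (y a) \<ge> 0) \<and> (\<exists>a\<in>A. y a \<noteq> 0)
        \<longrightarrow> (\<Sum>a\<in>A. c a * Re (y a)) > 0)"

end

theory Submission
  imports Defs
begin

lemma unique_sol_rat:
  fixes m :: "'j \<Rightarrow> 'i \<Rightarrow> real" and r :: "'j \<Rightarrow> real"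
  assumes "finite I"
    and "\<forall>j\<in>J. \<forall>i\<in>I. m j i \<in> \<rat>" and "\<forall>j\<in>J. r j \<in> \<rat>"
    and "\<forall>j\<in>J. (\<Sum>i\<in>I. m j i * \<mu> i) = r j"
    and "\<forall>\<nu>. (\<forall>j\<in>J. (\<Sum>i\<in>I. m j i * \<nu> i) = r j) \<longrightarrow> (\<forall>i\<in>I. \<nu> i = \<mu> i)"
  shows "\<forall>i\<in>I. \<mu> i \<in> \<rat>"
  using assms
proof (induction I arbitrary: m r \<mu> rule: finite_induct)
  case empty
  then show ?case by simp
next
  case (insert i0 I)
  show ?case
  proof (cases "\<forall>j\<in>J. m j i0 = 0")
    case True
    define \<nu> where "\<nu> = \<mu>(i0 := \<mu> i0 + 1)"
    have "\<forall>j\<in>J. (\<Sum>i\<in>insert i0 I. m j i * \<nu> i) = r j"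
    proof
      fix j assume j: "j \<in> J"
      have "(\<Sum>i\<in>insert i0 I. m j i * \<nu> i) = (\<Sum>i\<in>I. m j i * \<nu> i)"
        using insert.hyps True j by simp
      also have "\<dots> = (\<Sum>i\<in>I. m j i * \<mu> i)"
        using insert.hyps by (intro sum.cong) (auto simp: \<nu>_def)
      also have "\<dots> = (\<Sum>i\<in>insert i0 I. m j i * \<mu> i)"
        using insert.hyps True j by simp
      finally show "(\<Sum>i\<in>insert i0 I. m j i * \<nu> i) = r j" using insert.prems(3) j by simp
    qed
    then have "\<nu> i0 = \<mu> i0" using insert.prems(4) by blast
    then show ?thesis by (simp add: \<nu>_def)
  next
    case False
    then obtain j0 where j0: "j0 \<in> J" "m j0 i0 \<noteq> 0" by blast
    define c where "c = m j0 i0"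
    define m' where "m' = (\<lambda>j i. m j i - m j i0 * m j0 i / c)"
    define r' where "r' = (\<lambda>j. r j - m j i0 * r j0 / c)"
    have c: "c \<noteq> 0" "c \<in> \<rat>" using j0 insert.prems(1) by (auto simp: c_def)
    have "m j0 i0 * \<mu> i0 + (\<Sum>i\<in>I. m j0 i * \<mu> i) = r j0"
      using insert.prems(3) j0 insert.hyps by simp
    then have sum0: "(\<Sum>i\<in>I. m j0 i * \<mu> i) = r j0 - c * \<mu> i0"
      by (simp add: c_def algebra_simps)
    have sol: "\<forall>j\<in>J. (\<Sum>i\<in>I. m' j i * \<mu> i) = r' j"
    proof
      fix j assume j: "j \<in> J"
      have "(\<Sum>i\<in>I. m' j i * \<mu> i) = (\<Sum>i\<in>I. m j i * \<mu> i) - m j i0 / c * (\<Sum>i\<in>I. m j0 i * \<mu> i)"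
        by (simp add: m'_def sum_subtractf sum_distrib_left algebra_simps)
      also have "(\<Sum>i\<in>I. m j i * \<mu> i) = r j - m j i0 * \<mu> i0"
      proof -
        have "m j i0 * \<mu> i0 + (\<Sum>i\<in>I. m j i * \<mu> i) = r j"
          using insert.prems(3) j insert.hyps by simp
        then show ?thesis by linarith
      qed
      finally have "(\<Sum>i\<in>I. m' j i * \<mu> i) = r j - m j i0 * \<mu> i0 - m j i0 / c * (r j0 - c * \<mu> i0)"
        by (simp only: sum0)
      then show "(\<Sum>i\<in>I. m' j i * \<mu> i) = r' j"
        using c(1) by (simp add: r'_def field_simps)
    qed
    have uniq: "\<forall>\<nu>. (\<forall>j\<in>J. (\<Sum>i\<in>I. m' j i * \<nu> i) = r' j) \<longrightarrow> (\<forall>i\<in>I. \<nu> i = \<mu> i)"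
    proof (intro allI impI)
      fix \<nu> assume h: "\<forall>j\<in>J. (\<Sum>i\<in>I. m' j i * \<nu> i) = r' j"
      define \<nu>' where "\<nu>' = \<nu>(i0 := (r j0 - (\<Sum>i\<in>I. m j0 i * \<nu> i)) / c)"
      have eqI: "(\<Sum>i\<in>I. f i * \<nu>' i) = (\<Sum>i\<in>I. f i * \<nu> i)" for f
        using insert.hyps by (intro sum.cong) (auto simp: \<nu>'_def)
      have "\<forall>j\<in>J. (\<Sum>i\<in>insert i0 I. m j i * \<nu>' i) = r j"
      proof
        fix j assume j: "j \<in> J"
        have "(\<Sum>i\<in>I. m' j i * \<nu> i) = (\<Sum>i\<in>I. m j i * \<nu> i) - m j i0 / c * (\<Sum>i\<in>I. m j0 i * \<nu> i)"
          by (simp add: m'_def sum_subtractf sum_distrib_left algebra_simps)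
        then have S1: "(\<Sum>i\<in>I. m j i * \<nu> i) = r' j + m j i0 / c * (\<Sum>i\<in>I. m j0 i * \<nu> i)"
          using h j by simp
        have "(\<Sum>i\<in>insert i0 I. m j i * \<nu>' i) = m j i0 * \<nu>' i0 + (\<Sum>i\<in>I. m j i * \<nu> i)"
          using insert.hyps eqI by simp
        also have "\<nu>' i0 = (r j0 - (\<Sum>i\<in>I. m j0 i * \<nu> i)) / c" by (simp add: \<nu>'_def)
        also note S1
        finally have "(\<Sum>i\<in>insert i0 I. m j i * \<nu>' i) = m j i0 * ((r j0 - (\<Sum>i\<in>I. m j0 i * \<nu> i)) / c) + (r j - m j i0 * r j0 / c + m j i0 / c * (\<Sum>i\<in>I. m j0 i * \<nu> i))"
          by (simp add: r'_def)
        also have "\<dots> = r j" by (simp add: diff_divide_distrib right_diff_distrib)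
        finally show "(\<Sum>i\<in>insert i0 I. m j i * \<nu>' i) = r j" .
      qed
      then have "\<forall>i\<in>insert i0 I. \<nu>' i = \<mu> i" using insert.prems(4) by blast
      then show "\<forall>i\<in>I. \<nu> i = \<mu> i" using insert.hyps by (auto simp: \<nu>'_def split: if_splits)
    qed
    have ratI: "\<forall>i\<in>I. \<mu> i \<in> \<rat>"
    proof (rule insert.IH[of m' r' \<mu>])
      show "\<forall>j\<in>J. \<forall>i\<in>I. m' j i \<in> \<rat>"
        unfolding m'_def using insert.prems(1) j0 c by (intro ballI Rats_diff Rats_divide Rats_mult) auto
      show "\<forall>j\<in>J. r' j \<in> \<rat>"
        unfolding r'_def using insert.prems(1,2) j0 c by (intro ballI Rats_diff Rats_divide Rats_mult) auto
    qed (fact sol uniq)+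
    have "\<mu> i0 = (r j0 - (\<Sum>i\<in>I. m j0 i * \<mu> i)) / c" using sum0 c by simp
    moreover have "(r j0 - (\<Sum>i\<in>I. m j0 i * \<mu> i)) / c \<in> \<rat>"
      using ratI insert.prems(1,2) j0 c by (intro Rats_divide Rats_diff Rats_sum Rats_mult) auto
    ultimately show ?thesis using ratI by simp
  qed
qed

lemma common_denom:
  fixes f :: "'a \<Rightarrow> real"
  assumes "finite T" "\<forall>x\<in>T. f x \<in> \<rat>"
  shows "\<exists>D::nat. D > 0 \<and> (\<forall>x\<in>T. of_nat D * f x \<in> \<int>)"
  using assms
proof (induction T rule: finite_induct)
  case empty
  then show ?case by (intro exI[of _ 1]) auto
next
  case (insert x T)
  then obtain D where D: "D > 0" "\<forall>y\<in>T. of_nat D * f y \<in> \<int>" by auto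
  from insert.prems have "f x \<in> \<rat>" by auto
  then obtain p q where pq: "q > 0" "f x = of_int p / of_int q" by (auto elim: Rats_cases')
  define D' where "D' = D * nat q"
  have "D' > 0" using D pq by (simp add: D'_def)
  moreover have "of_nat D' * f y \<in> \<int>" if "y \<in> insert x T" for y
  proof (cases "y = x")
    case True
    have "of_nat D' * f y = of_int (int D * p)" using pq True by (simp add: D'_def)
    then show ?thesis by (metis Ints_of_int)
  next
    case False
    then have "y \<in> T" using that by auto
    then obtain k where "of_nat D * f y = of_int k" using D by (auto elim: Ints_cases)
    then have "of_nat D' * f y = of_int (q * k)" using pq
      by (simp add: D'_def)
    then show ?thesis by (metis Ints_of_int)
  qed
  ultimately show ?case by blast
qed

lemma pf_prod:
  assumes "finite X" "\<forall>x\<in>X. g x \<in> polyfun A"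
  shows "(\<lambda>y. \<Prod>x\<in>X. g x y) \<in> polyfun A"
  using assms
proof (induction X rule: finite_induct)
  case empty
  then show ?case by (simp add: polyfun.pconst)
next
  case (insert x X)
  have "(\<lambda>y. \<Prod>x\<in>insert x X. g x y) = (\<lambda>y. g x y * (\<Prod>x\<in>X. g x y))"
    using insert.hyps by simp
  moreover have "(\<lambda>y. g x y * (\<Prod>x\<in>X. g x y)) \<in> polyfun A"
    using insert by (intro polyfun.pmult) auto
  ultimately show ?case by simp
qed

lemma pf_pow:
  assumes "p \<in> polyfun A"
  shows "(\<lambda>y. p y ^ k) \<in> polyfun A"
proof (induction k)
  case 0
  then show ?case by (simp add: polyfun.pconst)
next
  case (Suc k)
  have "(\<lambda>y. p y * p y ^ k) \<in> polyfun A"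
    using polyfun.pmult[OF assms Suc] .
  then show ?case by simp
qed

lemma pf_diff:
  assumes "p \<in> polyfun A" "q \<in> polyfun A"
  shows "(\<lambda>y. p y - q y) \<in> polyfun A"
proof -
  have "(\<lambda>y. p y + (\<lambda>y. -1) y * q y) \<in> polyfun A"
    by (intro polyfun.padd polyfun.pmult assms polyfun.pconst)
  then show ?thesis by simp
qed

lemma power_int_sum':
  fixes t :: complex
  assumes "t \<noteq> 0" "finite X"
  shows "(\<Prod>a\<in>X. t powi f a) = t powi (\<Sum>a\<in>X. f a)"
  using assms(2)
proof (induction X rule: finite_induct)
  case empty
  then show ?case by simp
next
  case (insert x X)
  then show ?case using assms(1) by (simp add: power_int_add)
qed

lemma lmono_prod_pow:
  fixes t :: "complex^'n"
  assumes "\<forall>i. t$i \<noteq> 0" "finite X"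
  shows "(\<Prod>a\<in>X. lmono t a ^ k a) = (\<Prod>i\<in>UNIV. t$i powi (\<Sum>a\<in>X. int (k a) * a$i))"
proof -
  have "(\<Prod>a\<in>X. lmono t a ^ k a) = (\<Prod>a\<in>X. \<Prod>i\<in>UNIV. t$i powi (int (k a) * a$i))"
  proof (rule prod.cong[OF refl])
    fix a assume "a \<in> X"
    have "lmono t a ^ k a = (\<Prod>i\<in>UNIV. (t$i powi (a$i)) ^ k a)"
      by (simp add: lmono_def prod_power_distrib)
    also have "\<dots> = (\<Prod>i\<in>UNIV. t$i powi (int (k a) * a$i))"
      by (intro prod.cong refl) (metis mult.commute power_int_mult power_int_of_nat)
    finally show "lmono t a ^ k a = (\<Prod>i\<in>UNIV. t$i powi (int (k a) * a$i))" .
  qed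
  also have "\<dots> = (\<Prod>i\<in>UNIV. \<Prod>a\<in>X. t$i powi (int (k a) * a$i))"
    by (rule prod.swap)
  also have "\<dots> = (\<Prod>i\<in>UNIV. t$i powi (\<Sum>a\<in>X. int (k a) * a$i))"
    using assms by (intro prod.cong refl power_int_sum') auto
  finally show ?thesis .
qed

lemma bin_rel:
  fixes A :: "(int^'n) set" and \<alpha> \<beta> :: "int^'n \<Rightarrow> nat"
  assumes fin: "finite A" and y: "y \<in> Y_hat A"
    and deg: "(\<Sum>a\<in>A. \<alpha> a) = (\<Sum>a\<in>A. \<beta> a)"
    and mom: "\<forall>i. (\<Sum>a\<in>A. int (\<alpha> a) * a$i) = (\<Sum>a\<in>A. int (\<beta> a) * a$i)"
  shows "(\<Prod>a\<in>A. y a ^ \<alpha> a) = (\<Prod>a\<in>A. y a ^ \<beta> a)"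
proof -
  define p where "p = (\<lambda>z::int^'n \<Rightarrow> complex. (\<Prod>a\<in>A. z a ^ \<alpha> a) - (\<Prod>a\<in>A. z a ^ \<beta> a))"
  have pf: "p \<in> polyfun A"
    unfolding p_def using fin
    by (intro pf_diff pf_prod ballI pf_pow polyfun.pvar) auto
  have van: "p z = 0" if "z \<in> {y. \<exists>u t. u \<noteq> 0 \<and> (\<forall>i. t $ i \<noteq> 0) \<and> y = (\<lambda>a. if a \<in> A then u * lmono t a else 0)}" for z
  proof -
    from that obtain u and t :: "complex^'n" where ut: "u \<noteq> 0" "\<forall>i. t $ i \<noteq> 0"
      and z: "z = (\<lambda>a. if a \<in> A then u * lmono t a else 0)" by blast
    have gen: "(\<Prod>a\<in>A. z a ^ k a) = u ^ (\<Sum>a\<in>A. k a) * (\<Prod>i\<in>UNIV. t$i powi (\<Sum>a\<in>A. int (k a) * a$i))" for k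
    proof -
      have "(\<Prod>a\<in>A. z a ^ k a) = (\<Prod>a\<in>A. u ^ k a * lmono t a ^ k a)"
        by (intro prod.cong refl) (simp add: z power_mult_distrib)
      also have "\<dots> = u ^ (\<Sum>a\<in>A. k a) * (\<Prod>a\<in>A. lmono t a ^ k a)"
        by (simp add: prod.distrib power_sum)
      also have "\<dots> = u ^ (\<Sum>a\<in>A. k a) * (\<Prod>i\<in>UNIV. t$i powi (\<Sum>a\<in>A. int (k a) * a$i))"
        using lmono_prod_pow[OF ut(2) fin] by simp
      finally show ?thesis .
    qed
    show "p z = 0" unfolding p_def gen using deg mom by simp
  qed
  have "p y = 0"
    using y pf van unfolding Y_hat_def zariski_closure_def by blast
  then show ?thesis unfolding p_def by simp
qed

definition ncone :: "(real^'n) set \<Rightarrow> (real^'n) set \<Rightarrow> (real^'n) set" where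
  "ncone P G = {u. \<forall>y\<in>G. \<forall>x\<in>P. u \<bullet> y \<le> u \<bullet> x}"

lemma inner_normal_cone_eq: "inner_normal_cone P G = ncone P G"
  by (simp add: inner_normal_cone_def ncone_def)

lemma ncone_scale: "u \<in> ncone P G \<Longrightarrow> t \<ge> 0 \<Longrightarrow> t *\<^sub>R u \<in> ncone P G"
  by (auto simp: ncone_def intro: mult_left_mono)

lemma realv_inner: "realv v \<bullet> realv a = of_int (idot v a)"
  by (simp add: realv_def idot_def inner_vec_def)

lemma realv_eq_0: "realv v = 0 \<longleftrightarrow> v = 0"
  by (simp add: realv_def vec_eq_iff)

lemma realv_inj: "inj realv"
  by (auto simp: inj_def realv_def vec_eq_iff)

lemma relint_min:
  fixes G P :: "(real^'n) set"
  assumes y0: "y0 \<in> rel_interior G" and GP: "G \<subseteq> P"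
    and min: "\<forall>x\<in>P. u \<bullet> y0 \<le> u \<bullet> x"
  shows "u \<in> ncone P G"
proof -
  have le: "u \<bullet> y \<le> u \<bullet> y0" if y: "y \<in> G" for y
  proof (cases "y = y0")
    case True then show ?thesis by simp
  next
    case False
    obtain e where e: "e > 0" "cball y0 e \<inter> affine hull G \<subseteq> G"
      using y0 by (auto simp: mem_rel_interior_cball)
    define d where "d = y0 - y"
    have dn: "norm d > 0" using False by (simp add: d_def)
    define \<delta> where "\<delta> = e / norm d"
    have \<delta>: "\<delta> > 0" using e dn by (simp add: \<delta>_def)
    define z where "z = (1 + \<delta>) *\<^sub>R y0 + (- \<delta>) *\<^sub>R y"
    have "y0 \<in> G" using y0 rel_interior_subset by blast
    have zaff: "z \<in> affine hull G"
      unfolding z_def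
      by (rule mem_affine[OF affine_affine_hull]) (auto intro: hull_inc \<open>y0 \<in> G\<close> y)
    have zd: "z = y0 + \<delta> *\<^sub>R d" by (simp add: z_def d_def algebra_simps)
    have "dist y0 z = e" using dn e by (simp add: zd dist_norm \<delta>_def)
    then have "z \<in> G" using e zaff by auto
    then have "u \<bullet> y0 \<le> u \<bullet> z" using min GP by auto
    then have "0 \<le> \<delta> * (u \<bullet> d)" by (simp add: zd inner_add_right)
    then have "0 \<le> u \<bullet> d" using \<delta> by (simp add: zero_le_mult_iff)
    then show ?thesis by (simp add: d_def inner_diff_right)
  qed
  show ?thesis unfolding ncone_def using le min by (auto intro: order_trans)
qed

locale cox_setup =
  fixes A :: "(int^'n) set" and F :: "(real^'n) set \<Rightarrow> int^'n" and b :: "(real^'n) set \<Rightarrow> int"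
  assumes finA: "finite A"
    and dimA: "aff_dim (convA A) = int CARD('n)"
    and primF: "\<forall>\<rho>\<in>fan_rays A. prim_gen \<rho> (F \<rho>)"
    and ineq: "convA A = {p. \<forall>\<rho>\<in>fan_rays A. (\<Sum>i\<in>UNIV. of_int (F \<rho> $ i) * p $ i) + of_int (b \<rho>) \<ge> (0::real)}"
begin

abbreviation "P \<equiv> convA A"
abbreviation "R \<equiv> fan_rays A"
definition fv :: "(real^'n) set \<Rightarrow> real^'n" where "fv \<rho> = realv (F \<rho>)"
definition e :: "(real^'n) set \<Rightarrow> real^'n \<Rightarrow> real" where "e \<rho> p = fv \<rho> \<bullet> p + of_int (b \<rho>)"

lemma P_def': "P = {p. \<forall>\<rho>\<in>R. e \<rho> p \<ge> 0}"
  unfolding ineq e_def fv_def by (simp add: realv_def inner_vec_def)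

lemma inP: "p \<in> P \<longleftrightarrow> (\<forall>\<rho>\<in>R. e \<rho> p \<ge> 0)"
  using P_def' by blast

lemma e_realv: "e \<rho> (realv a) = of_int (idot (F \<rho>) a + b \<rho>)"
  by (simp add: e_def fv_def realv_inner)

lemma A_in_P: "a \<in> A \<Longrightarrow> realv a \<in> P"
  by (simp add: convA_def hull_inc)

lemma e_nonneg_int: "a \<in> A \<Longrightarrow> \<rho> \<in> R \<Longrightarrow> 0 \<le> idot (F \<rho>) a + b \<rho>"
  using A_in_P[of a] inP e_realv by fastforce

lemma compactP: "compact P"
  by (simp add: convA_def compact_convex_hull finA finite_imageI finite_imp_compact)

lemma convexP: "convex P"
  by (simp add: convA_def)

lemma polytopeP: "polytope P"
  unfolding convA_def polytope_def using finA by blast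

lemma P_ne: "P \<noteq> {}"
proof
  assume "P = {}"
  then show False using dimA by simp
qed

lemma A_ne: "A \<noteq> {}"
  using P_ne by (auto simp: convA_def)

lemma finR: "finite R"
proof -
  have "normal_fan A \<subseteq> (\<lambda>G. inner_normal_cone P G) ` {G. G face_of P}"
    by (auto simp: normal_fan_def)
  moreover have "finite {G. G face_of P}" by (rule finite_polytope_faces[OF polytopeP])
  ultimately have "finite (normal_fan A)" by (meson finite_imageI finite_subset)
  then show ?thesis unfolding fan_rays_def by simp
qed

lemma fv_nonzero: "\<rho> \<in> R \<Longrightarrow> fv \<rho> \<noteq> 0"
  using primF by (auto simp: prim_gen_def fv_def realv_eq_0)

lemma fv_in: "\<rho> \<in> R \<Longrightarrow> fv \<rho> \<in> \<rho>"
  using primF by (auto simp: prim_gen_def fv_def)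

lemma R_face: assumes "\<rho> \<in> R"
  obtains G where "G face_of P" "G \<noteq> {}" "\<rho> = ncone P G"
  using assms by (auto simp: fan_rays_def normal_fan_def inner_normal_cone_eq)

lemma ray: assumes r: "\<rho> \<in> R" shows "\<rho> = {t *\<^sub>R fv \<rho> | t. t \<ge> 0}"
proof -
  obtain G where G: "G face_of P" "G \<noteq> {}" "\<rho> = ncone P G" using R_face r by blast
  have ad: "aff_dim \<rho> = 1" using r by (simp add: fan_rays_def)
  have fvin: "fv \<rho> \<in> \<rho>" and fv0: "fv \<rho> \<noteq> 0" using r fv_in fv_nonzero by auto
  have "0 \<in> \<rho>" using G by (simp add: ncone_def)
  show ?thesis
  proof
    show "{t *\<^sub>R fv \<rho> | t. t \<ge> 0} \<subseteq> \<rho>" using fvin G ncone_scale by auto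
  next
    show "\<rho> \<subseteq> {t *\<^sub>R fv \<rho> | t. t \<ge> 0}"
    proof
      fix u assume u: "u \<in> \<rho>"
      have "collinear \<rho>" using ad by (simp add: collinear_aff_dim)
      then obtain w where w: "\<forall>x\<in>\<rho>. \<forall>y\<in>\<rho>. \<exists>c. x - y = c *\<^sub>R w" by (auto simp: collinear_def)
      obtain c0 where c0: "fv \<rho> = c0 *\<^sub>R w" using w fvin \<open>0 \<in> \<rho>\<close> by fastforce
      obtain c1 where c1: "u = c1 *\<^sub>R w" using w u \<open>0 \<in> \<rho>\<close> by fastforce
      have "c0 \<noteq> 0" using c0 fv0 by auto
      define t where "t = c1 / c0"
      have ut: "u = t *\<^sub>R fv \<rho>" using c0 c1 \<open>c0 \<noteq> 0\<close> by (simp add: t_def)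
      have "t \<ge> 0"
      proof (rule ccontr)
        assume "\<not> t \<ge> 0"
        then have tn: "t < 0" by simp
        have "0 \<le> - 1 / t" using tn by simp
        moreover have "u \<in> ncone P G" using u G by simp
        ultimately have "(- 1 / t) *\<^sub>R u \<in> ncone P G" using ncone_scale by blast
        moreover have "(- 1 / t) *\<^sub>R u = - fv \<rho>" using ut tn by simp
        ultimately have mfv: "- fv \<rho> \<in> ncone P G" by simp
        have fvG: "fv \<rho> \<in> ncone P G" using fvin G by simp
        obtain y0 where y0: "y0 \<in> G" using G by auto
        have "P \<subseteq> {x. fv \<rho> \<bullet> x = fv \<rho> \<bullet> y0}"
        proof
          fix x assume "x \<in> P"
          then have "fv \<rho> \<bullet> y0 \<le> fv \<rho> \<bullet> x" "- fv \<rho> \<bullet> y0 \<le> - fv \<rho> \<bullet> x"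
            using mfv fvG y0 by (auto simp: ncone_def)
          then show "x \<in> {x. fv \<rho> \<bullet> x = fv \<rho> \<bullet> y0}" by simp
        qed
        then have "aff_dim P \<le> aff_dim {x. fv \<rho> \<bullet> x = fv \<rho> \<bullet> y0}" by (rule aff_dim_subset)
        also have "\<dots> = int CARD('n) - 1" using fv0 by simp
        finally show False using dimA by simp
      qed
      then show "u \<in> {t *\<^sub>R fv \<rho> | t. t \<ge> 0}" using ut by blast
    qed
  qed
qed

lemma ray_eq: assumes "\<rho> \<in> R" "\<rho>' \<in> R" "fv \<rho>' \<in> \<rho>" shows "\<rho>' = \<rho>"
proof -
  obtain t where t: "fv \<rho>' = t *\<^sub>R fv \<rho>" "t \<ge> 0" using ray[OF assms(1)] assms(3) by blast
  have "t \<noteq> 0" using t fv_nonzero[OF assms(2)] by auto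
  then have tp: "t > 0" using t by simp
  have "{s *\<^sub>R fv \<rho>' | s. s \<ge> 0} = {s *\<^sub>R fv \<rho> | s. s \<ge> 0}"
  proof (intro set_eqI iffI)
    fix x assume "x \<in> {s *\<^sub>R fv \<rho>' | s. s \<ge> 0}"
    then obtain s where "s \<ge> 0" "x = (s * t) *\<^sub>R fv \<rho>" using t by auto
    then show "x \<in> {s *\<^sub>R fv \<rho> | s. s \<ge> 0}" using tp by (metis (mono_tags) mem_Collect_eq mult_nonneg_nonneg less_imp_le)
  next
    fix x assume "x \<in> {s *\<^sub>R fv \<rho> | s. s \<ge> 0}"
    then obtain s where "s \<ge> 0" "x = s *\<^sub>R fv \<rho>" by auto
    then have "x = (s / t) *\<^sub>R fv \<rho>'" "s / t \<ge> 0" using t tp by auto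
    then show "x \<in> {s *\<^sub>R fv \<rho>' | s. s \<ge> 0}" by blast
  qed
  then show ?thesis using ray[OF assms(1)] ray[OF assms(2)] by simp
qed

lemma tight: assumes r: "\<rho> \<in> R" shows "\<exists>y\<in>P. e \<rho> y = 0"
proof (rule ccontr)
  assume "\<not> (\<exists>y\<in>P. e \<rho> y = 0)"
  then have pos: "\<forall>y\<in>P. e \<rho> y > 0" using inP r by (metis less_eq_real_def)
  obtain G where G: "G face_of P" "G \<noteq> {}" "\<rho> = ncone P G" using R_face r by blast
  have GP: "G \<subseteq> P" using G face_of_imp_subset by blast
  obtain y0 where y0: "y0 \<in> rel_interior G"
    using G rel_interior_eq_empty face_of_imp_convex by blast
  have y0G: "y0 \<in> G" using y0 rel_interior_subset by blast
  have y0P: "y0 \<in> P" using y0G GP by blast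
  have allpos: "\<forall>\<rho>'\<in>R. e \<rho>' y0 > 0"
  proof
    fix \<rho>' assume r': "\<rho>' \<in> R"
    show "e \<rho>' y0 > 0"
    proof (rule ccontr)
      assume "\<not> e \<rho>' y0 > 0"
      moreover have "0 \<le> e \<rho>' y0" using inP y0P r' by blast
      ultimately have z: "e \<rho>' y0 = 0" by linarith
      have "\<forall>x\<in>P. fv \<rho>' \<bullet> y0 \<le> fv \<rho>' \<bullet> x"
        using z inP r' by (fastforce simp: e_def)
      then have "fv \<rho>' \<in> ncone P G" by (rule relint_min[OF y0 GP])
      then have "\<rho>' = \<rho>" using ray_eq[OF r r'] G by simp
      then show False using z pos y0P by auto
    qed
  qed
  have ev: "\<forall>\<^sub>F \<epsilon> in at_right 0. \<forall>\<rho>'\<in>R. 0 < e \<rho>' (y0 - \<epsilon> *\<^sub>R fv \<rho>)"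
  proof (rule eventually_ball_finite[OF finR], rule ballI)
    fix \<rho>' assume r': "\<rho>' \<in> R"
    have "((\<lambda>\<epsilon>. e \<rho>' (y0 - \<epsilon> *\<^sub>R fv \<rho>)) \<longlongrightarrow> e \<rho>' (y0 - 0 *\<^sub>R fv \<rho>)) (at_right 0)"
      unfolding e_def by (intro tendsto_intros)
    then have "((\<lambda>\<epsilon>. e \<rho>' (y0 - \<epsilon> *\<^sub>R fv \<rho>)) \<longlongrightarrow> e \<rho>' y0) (at_right 0)" by simp
    then show "\<forall>\<^sub>F \<epsilon> in at_right 0. 0 < e \<rho>' (y0 - \<epsilon> *\<^sub>R fv \<rho>)"
      using allpos r' by (simp add: order_tendstoD(1))
  qed
  have "\<forall>\<^sub>F \<epsilon> in at_right (0::real). 0 < \<epsilon> \<and> (\<forall>\<rho>'\<in>R. 0 < e \<rho>' (y0 - \<epsilon> *\<^sub>R fv \<rho>))"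
    using eventually_conj[OF eventually_at_right_less[of "0::real"] ev] by simp
  then obtain \<epsilon> :: real where \<epsilon>: "0 < \<epsilon>" "\<forall>\<rho>'\<in>R. 0 < e \<rho>' (y0 - \<epsilon> *\<^sub>R fv \<rho>)"
    using eventually_happens[of _ "at_right (0::real)"] by auto
  then have "y0 - \<epsilon> *\<^sub>R fv \<rho> \<in> P" using inP by (auto intro: less_imp_le)
  moreover have "fv \<rho> \<in> ncone P G" using fv_in[OF r] G by simp
  ultimately have "fv \<rho> \<bullet> y0 \<le> fv \<rho> \<bullet> (y0 - \<epsilon> *\<^sub>R fv \<rho>)" using y0G by (auto simp: ncone_def)
  then have "\<epsilon> * (fv \<rho> \<bullet> fv \<rho>) \<le> 0" by (simp add: inner_diff_right)
  then have "fv \<rho> \<bullet> fv \<rho> \<le> 0" using \<epsilon> by (simp add: mult_le_0_iff)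
  then show False using fv_nonzero[OF r] by (metis inner_gt_zero_iff not_le)
qed

lemma minchar: assumes r: "\<rho> \<in> R" and v: "v \<in> P"
  shows "(\<forall>x\<in>P. fv \<rho> \<bullet> v \<le> fv \<rho> \<bullet> x) \<longleftrightarrow> e \<rho> v = 0"
proof
  assume h: "\<forall>x\<in>P. fv \<rho> \<bullet> v \<le> fv \<rho> \<bullet> x"
  obtain y where y: "y \<in> P" "e \<rho> y = 0" using tight[OF r] by blast
  have "fv \<rho> \<bullet> v \<le> fv \<rho> \<bullet> y" using h y(1) by blast
  then have "e \<rho> v \<le> e \<rho> y" by (simp add: e_def)
  moreover have "e \<rho> v \<ge> 0" using v r inP by blast
  ultimately show "e \<rho> v = 0" using y by simp
next
  assume "e \<rho> v = 0"
  then show "\<forall>x\<in>P. fv \<rho> \<bullet> v \<le> fv \<rho> \<bullet> x" using inP r by (fastforce simp: e_def)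
qed

end

context cox_setup begin

lemma face_extreme:
  assumes "G face_of P" "G \<noteq> {}"
  obtains w where "w \<in> G" "w extreme_point_of P"
proof -
  have "compact G" using face_of_imp_compact[OF convexP compactP assms(1)] .
  moreover have "convex G" using assms(1) face_of_imp_convex by blast
  ultimately obtain w where "w extreme_point_of G" using extreme_point_exists_convex assms(2) by blast
  then show ?thesis using that extreme_point_of_face[OF assms(1)] by blast
qed

lemma ncone_sub_vertex: "w \<in> G \<Longrightarrow> ncone P G \<subseteq> ncone P {w}"
  by (auto simp: ncone_def)

lemma vertex_in_fan: "v extreme_point_of P \<Longrightarrow> ncone P {v} \<in> normal_fan A"
  unfolding normal_fan_def inner_normal_cone_eq
  using face_of_singleton by blast

lemma vertex_max:
  assumes v: "v extreme_point_of P"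
  shows "ncone P {v} \<in> max_cones A"
proof -
  have "\<tau> = ncone P {v}" if \<tau>: "\<tau> \<in> normal_fan A" "ncone P {v} \<subseteq> \<tau>" for \<tau>
  proof -
    obtain G where G: "G face_of P" "G \<noteq> {}" "\<tau> = ncone P G"
      using \<tau>(1) by (auto simp: normal_fan_def inner_normal_cone_eq)
    obtain w where w: "w \<in> G" "w extreme_point_of P" using face_extreme G by blast
    have \<tau>w: "\<tau> \<subseteq> ncone P {w}" using G(3) ncone_sub_vertex w(1) by simp
    have "{v} exposed_face_of P"
      using exposed_face_of_polyhedron[OF polytope_imp_polyhedron[OF polytopeP]] face_of_singleton v by blast
    then obtain a c where ac: "P \<subseteq> {x. a \<bullet> x \<le> c}" "{v} = P \<inter> {x. a \<bullet> x = c}"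
      unfolding exposed_face_of_def by blast
    have "- a \<in> ncone P {v}" using ac by (auto simp: ncone_def)
    then have "- a \<in> ncone P {w}" using \<tau>(2) \<tau>w by blast
    moreover have "v \<in> P" "a \<bullet> v = c" using ac by auto
    ultimately have "a \<bullet> w \<ge> c" by (auto simp: ncone_def)
    moreover have "w \<in> P" using w extreme_point_of_def by blast
    ultimately have "w \<in> P \<inter> {x. a \<bullet> x = c}" using ac by force
    then have "w = v" using ac by blast
    then show ?thesis using \<tau>(2) \<tau>w by blast
  qed
  then show ?thesis unfolding max_cones_def using vertex_in_fan[OF v] by blast
qed

lemma maxcone_vertex:
  assumes "\<sigma> \<in> max_cones A"
  obtains v where "v \<in> A" "\<sigma> = ncone P {realv v}"
proof -
  have s: "\<sigma> \<in> normal_fan A" "\<forall>\<tau>\<in>normal_fan A. \<sigma> \<subseteq> \<tau> \<longrightarrow> \<tau> = \<sigma>"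
    using assms by (auto simp: max_cones_def)
  obtain G where G: "G face_of P" "G \<noteq> {}" "\<sigma> = ncone P G"
    using s(1) by (auto simp: normal_fan_def inner_normal_cone_eq)
  obtain w where w: "w \<in> G" "w extreme_point_of P" using face_extreme G by blast
  have "w \<in> realv ` A" using w(2) extreme_point_of_convex_hull by (metis convA_def)
  then obtain v where v: "v \<in> A" "w = realv v" by blast
  have "ncone P {w} = \<sigma>" using s vertex_in_fan[OF w(2)] ncone_sub_vertex[OF w(1)] G(3) by blast
  then show ?thesis using that v by blast
qed

lemma D2a:
  assumes "\<rho> \<in> R" "v \<in> A" "\<rho> \<subseteq> ncone P {realv v}"
  shows "e \<rho> (realv v) = 0"
proof -
  have "fv \<rho> \<in> ncone P {realv v}" using assms fv_in by blast
  then have "\<forall>x\<in>P. fv \<rho> \<bullet> realv v \<le> fv \<rho> \<bullet> x" by (simp add: ncone_def)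
  then show ?thesis using minchar[OF assms(1) A_in_P[OF assms(2)]] by blast
qed

lemma D2b:
  assumes a: "a \<in> A"
  obtains \<sigma> where "\<sigma> \<in> max_cones A" "\<forall>\<rho>\<in>R. e \<rho> (realv a) = 0 \<longrightarrow> \<rho> \<subseteq> \<sigma>"
proof -
  define K where "K = {\<rho>\<in>R. e \<rho> (realv a) = 0}"
  have finK: "finite K" using finR by (simp add: K_def)
  define h where "h = (\<Sum>\<rho>\<in>K. fv \<rho>)"
  define c where "c = - (\<Sum>\<rho>\<in>K. real_of_int (b \<rho>))"
  have hsum: "h \<bullet> x - c = (\<Sum>\<rho>\<in>K. e \<rho> x)" for x
    by (simp add: h_def c_def e_def inner_sum_left sum.distrib)
  have Kpos: "\<rho> \<in> K \<Longrightarrow> x \<in> P \<Longrightarrow> 0 \<le> e \<rho> x" for \<rho> x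
    using inP K_def by auto
  have hge: "x \<in> P \<Longrightarrow> h \<bullet> x \<ge> c" for x
    using hsum[of x] sum_nonneg[of K "\<lambda>\<rho>. e \<rho> x"] Kpos by force
  define T where "T = P \<inter> {x. h \<bullet> x = c}"
  have Tface: "T face_of P" unfolding T_def
    by (rule face_of_Int_supporting_hyperplane_ge[OF convexP]) (use hge in auto)
  have "realv a \<in> T"
  proof -
    have "(\<Sum>\<rho>\<in>K. e \<rho> (realv a)) = 0" by (simp add: K_def)
    then show ?thesis using hsum[of "realv a"] A_in_P[OF a] by (simp add: T_def)
  qed
  then obtain v where v: "v \<in> T" "v extreme_point_of P" using face_extreme Tface by blast
  have vP: "v \<in> P" using v T_def by blast
  have eK: "\<forall>\<rho>\<in>K. e \<rho> v = 0"
  proof -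
    have "(\<Sum>\<rho>\<in>K. e \<rho> v) = 0" using hsum[of v] v(1) by (simp add: T_def)
    then show ?thesis using sum_nonneg_eq_0_iff[OF finK, of "\<lambda>\<rho>. e \<rho> v"] Kpos[OF _ vP] by simp
  qed
  have "\<rho> \<subseteq> ncone P {v}" if r: "\<rho> \<in> R" "e \<rho> (realv a) = 0" for \<rho>
  proof -
    have "\<rho> \<in> K" using r by (simp add: K_def)
    then have "e \<rho> v = 0" using eK by blast
    then have fvin: "fv \<rho> \<in> ncone P {v}" using minchar[OF r(1) vP] by (simp add: ncone_def)
    show ?thesis
    proof
      fix u assume "u \<in> \<rho>"
      then obtain t where "t \<ge> 0" "u = t *\<^sub>R fv \<rho>" using ray[OF r(1)] by blast
      then show "u \<in> ncone P {v}" using ncone_scale[OF fvin] by simp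
    qed
  qed
  then show ?thesis using that vertex_max[OF v(2)] by blast
qed

definition mon :: "((real^'n) set \<Rightarrow> real) \<Rightarrow> int^'n \<Rightarrow> real" where
  "mon x a = (\<Prod>\<rho>\<in>R. x \<rho> ^ nat (idot (F \<rho>) a + b \<rho>))"

lemma f_cox_mon: "f_cox A F b c x = (\<Sum>a\<in>A. c a * mon x a)"
  by (simp add: f_cox_def mon_def)

lemma mon_factor_zero:
  fixes x :: "(real^'n) set \<Rightarrow> real"
  assumes "a \<in> A" "\<rho> \<in> R"
  shows "x \<rho> ^ nat (idot (F \<rho>) a + b \<rho>) = 0 \<longleftrightarrow> (x \<rho> = 0 \<and> e \<rho> (realv a) \<noteq> 0)"
proof -
  define k where "k = idot (F \<rho>) a + b \<rho>"
  have k: "e \<rho> (realv a) = of_int k" "k \<ge> 0"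
    using e_realv e_nonneg_int[OF assms] by (auto simp: k_def)
  have "x \<rho> ^ nat k = 0 \<longleftrightarrow> (x \<rho> = 0 \<and> nat k \<noteq> 0)" by auto
  also have "nat k \<noteq> 0 \<longleftrightarrow> e \<rho> (realv a) \<noteq> 0" using k by auto
  finally show ?thesis by (simp only: k_def)
qed

lemma mon_zero_iff:
  assumes "a \<in> A"
  shows "mon x a = 0 \<longleftrightarrow> (\<exists>\<rho>\<in>R. x \<rho> = 0 \<and> e \<rho> (realv a) \<noteq> 0)"
proof -
  have "mon x a = 0 \<longleftrightarrow> (\<exists>\<rho>\<in>R. x \<rho> ^ nat (idot (F \<rho>) a + b \<rho>) = 0)"
    unfolding mon_def using finR by (rule prod_zero_iff)
  also have "\<dots> \<longleftrightarrow> (\<exists>\<rho>\<in>R. x \<rho> = 0 \<and> e \<rho> (realv a) \<noteq> 0)"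
    by (rule bex_cong[OF refl]) (rule mon_factor_zero[OF assms])
  finally show ?thesis .
qed

lemma ZA_iff:
  "(\<lambda>\<rho>. complex_of_real (x \<rho>)) \<in> Z_A A \<longleftrightarrow> (\<forall>a\<in>A. mon x a = 0)"
proof -
  have Z: "(\<lambda>\<rho>. complex_of_real (x \<rho>)) \<in> Z_A A \<longleftrightarrow>
      (\<forall>\<sigma>\<in>max_cones A. \<exists>\<rho>\<in>R. \<not> \<rho> \<subseteq> \<sigma> \<and> x \<rho> = 0)"
  proof -
    have pz: "(\<Prod>\<rho>\<in>{\<rho>\<in>R. \<not> \<rho> \<subseteq> \<sigma>}. complex_of_real (x \<rho>)) = 0 \<longleftrightarrow> (\<exists>\<rho>\<in>R. \<not> \<rho> \<subseteq> \<sigma> \<and> x \<rho> = 0)" for \<sigma>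
      using finR by (subst prod_zero_iff) auto
    show ?thesis by (simp only: Z_A_def mem_Collect_eq pz)
  qed
  show ?thesis
  proof
    assume h: "(\<lambda>\<rho>. complex_of_real (x \<rho>)) \<in> Z_A A"
    show "\<forall>a\<in>A. mon x a = 0"
    proof
      fix a assume a: "a \<in> A"
      obtain \<sigma> where \<sigma>: "\<sigma> \<in> max_cones A" "\<forall>\<rho>\<in>R. e \<rho> (realv a) = 0 \<longrightarrow> \<rho> \<subseteq> \<sigma>"
        using D2b[OF a] by blast
      have "\<forall>\<sigma>\<in>max_cones A. \<exists>\<rho>\<in>R. \<not> \<rho> \<subseteq> \<sigma> \<and> x \<rho> = 0" using h by (simp only: Z)
      then obtain \<rho> where \<rho>: "\<rho> \<in> R" "\<not> \<rho> \<subseteq> \<sigma>" "x \<rho> = 0" using \<sigma>(1) by blast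
      have "e \<rho> (realv a) \<noteq> 0" using \<sigma>(2) \<rho>(1,2) by auto
      then have "\<exists>\<rho>\<in>R. x \<rho> = 0 \<and> e \<rho> (realv a) \<noteq> 0" using \<rho>(1,3) by (intro bexI[of _ \<rho>]) auto
      then show "mon x a = 0" by (subst mon_zero_iff[OF a])
    qed
  next
    assume h: "\<forall>a\<in>A. mon x a = 0"
    have "\<exists>\<rho>\<in>R. \<not> \<rho> \<subseteq> \<sigma> \<and> x \<rho> = 0" if \<sigma>: "\<sigma> \<in> max_cones A" for \<sigma>
    proof -
      obtain v where v: "v \<in> A" "\<sigma> = ncone P {realv v}" using maxcone_vertex[OF \<sigma>] by blast
      have "mon x v = 0" using h v(1) by blast
      then have "\<exists>\<rho>\<in>R. x \<rho> = 0 \<and> e \<rho> (realv v) \<noteq> 0" by (subst (asm) mon_zero_iff[OF v(1)])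
      then obtain \<rho> where \<rho>: "\<rho> \<in> R" "x \<rho> = 0" "e \<rho> (realv v) \<noteq> 0" by blast
      then have "\<not> \<rho> \<subseteq> \<sigma>" using D2a[OF \<rho>(1) v(1)] v(2) by auto
      then show ?thesis using \<rho>(1,2) by auto
    qed
    then have "\<forall>\<sigma>\<in>max_cones A. \<exists>\<rho>\<in>R. \<not> \<rho> \<subseteq> \<sigma> \<and> x \<rho> = 0" by blast
    then show "(\<lambda>\<rho>. complex_of_real (x \<rho>)) \<in> Z_A A" by (simp only: Z)
  qed
qed

end

lemma cara_indep:
  fixes p :: "'a::euclidean_space set"
  assumes "y \<in> convex hull p"
  shows "\<exists>S u. finite S \<and> S \<subseteq> p \<and> \<not> affine_dependent S \<and> (\<forall>x\<in>S. 0 \<le> u x) \<and> sum u S = 1 \<and> (\<Sum>v\<in>S. u v *\<^sub>R v) = y"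
proof -
  let ?P = "\<lambda>n. \<exists>S u. finite S \<and> card S = n \<and> S \<subseteq> p \<and> (\<forall>x\<in>S. 0 \<le> u x) \<and>
    sum u S = 1 \<and> (\<Sum>v\<in>S. u v *\<^sub>R v) = y"
  obtain N where "?P N" using assms unfolding convex_hull_explicit by auto
  then have "\<exists>n\<le>N. (\<forall>k<n. \<not> ?P k) \<and> ?P n"
    by (rule_tac ex_least_nat_le, auto)
  then obtain n where "?P n" and smallest: "\<forall>k<n. \<not> ?P k"
    by blast
  then obtain S u where S: "finite S" "card S = n" "S\<subseteq>p"
    and u: "\<forall>x\<in>S. 0 \<le> u x" "sum u S = 1"  "(\<Sum>v\<in>S. u v *\<^sub>R v) = y" by auto
  have "\<not> affine_dependent S"
  proof
    assume "affine_dependent S"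
    then obtain w v where wv: "sum w S = 0" "v\<in>S" "w v \<noteq> 0" "(\<Sum>v\<in>S. w v *\<^sub>R v) = 0"
      using affine_dependent_explicit_finite[OF S(1)] by auto
    define i where "i = (\<lambda>v. (u v) / (- w v)) ` {v\<in>S. w v < 0}"
    define t where "t = Min i"
    have "\<exists>x\<in>S. w x < 0"
      by (smt (verit, best) S(1) sum_pos2 wv)
    then have "i \<noteq> {}" unfolding i_def by auto
    then have "t \<ge> 0"
      using Min_ge_iff[of i 0] and S(1) u[unfolded le_less]
      unfolding t_def i_def
      by (auto simp: divide_le_0_iff)
    have t: "\<forall>v\<in>S. u v + t * w v \<ge> 0"
    proof
      fix v
      assume "v \<in> S"
      then have v: "0 \<le> u v"
        using u(1) by blast
      show "0 \<le> u v + t * w v"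
      proof (cases "w v < 0")
        case False
        thus ?thesis using v \<open>t\<ge>0\<close> by auto
      next
        case True
        then have "t \<le> u v / (- w v)"
          using \<open>v\<in>S\<close> S unfolding t_def i_def by (auto intro: Min_le)
        then show ?thesis
          unfolding real_0_le_add_iff
          using True neg_le_minus_divide_eq by auto
      qed
    qed
    obtain a where "a \<in> S" and "t = (\<lambda>v. (u v) / (- w v)) a" and "w a < 0"
      using Min_in[OF _ \<open>i\<noteq>{}\<close>] and S(1) unfolding i_def t_def by auto
    then have a: "a \<in> S" "u a + t * w a = 0" by auto
    have *: "\<And>f. sum f (S - {a}) = sum f S - ((f a)::'b::ab_group_add)"
      unfolding sum.remove[OF S(1) \<open>a\<in>S\<close>] by auto
    have "(\<Sum>v\<in>S. u v + t * w v) = 1"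
      by (metis add.right_neutral mult_zero_right sum.distrib sum_distrib_left u(2) wv(1))
    moreover have "(\<Sum>v\<in>S. u v *\<^sub>R v + (t * w v) *\<^sub>R v) - (u a *\<^sub>R a + (t * w a) *\<^sub>R a) = y"
      unfolding sum.distrib u(3) scaleR_scaleR[symmetric] scaleR_right.sum [symmetric] wv(4)
      using a(2) [THEN eq_neg_iff_add_eq_0 [THEN iffD2]] by simp
    ultimately have "?P (n - 1)"
      apply (rule_tac x="(S - {a})" in exI)
      apply (rule_tac x="\<lambda>v. u v + t * w v" in exI)
      using S t a
      apply (auto simp: * scaleR_left_distrib)
      done
    moreover have "n > 0" using S(1,2) a(1) card_gt_0_iff by blast
    ultimately show False
      using smallest[THEN spec[where x="n - 1"]] by simp
  qed
  then show ?thesis using S u by blast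
qed

lemma bary_rat:
  fixes T :: "(real^'n) set" and q :: "real^'n"
  assumes fin: "finite T" and ind: "\<not> affine_dependent T"
    and Trat: "\<forall>v\<in>T. \<forall>i. v$i \<in> \<rat>" and qrat: "\<forall>i. q$i \<in> \<rat>"
    and s1: "sum u T = 1" and sq: "(\<Sum>v\<in>T. u v *\<^sub>R v) = q"
  shows "\<forall>v\<in>T. u v \<in> \<rat>"
proof -
  define m :: "'n option \<Rightarrow> real^'n \<Rightarrow> real" where
    "m = (\<lambda>j v. case j of None \<Rightarrow> 1 | Some i \<Rightarrow> v$i)"
  define r :: "'n option \<Rightarrow> real" where
    "r = (\<lambda>j. case j of None \<Rightarrow> 1 | Some i \<Rightarrow> q$i)"
  have eqs: "(\<forall>j\<in>UNIV. (\<Sum>v\<in>T. m j v * \<nu> v) = r j) \<longleftrightarrow> sum \<nu> T = 1 \<and> (\<Sum>v\<in>T. \<nu> v *\<^sub>R v) = q" for \<nu>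
  proof
    assume h: "\<forall>j\<in>UNIV. (\<Sum>v\<in>T. m j v * \<nu> v) = r j"
    have "sum \<nu> T = 1" using h[rule_format, of None] by (simp add: m_def r_def)
    moreover have "(\<Sum>v\<in>T. \<nu> v *\<^sub>R v) = q"
      unfolding vec_eq_iff
    proof
      fix i show "(\<Sum>v\<in>T. \<nu> v *\<^sub>R v) $ i = q $ i"
        using h[rule_format, of "Some i"] by (simp add: m_def r_def mult.commute)
    qed
    ultimately show "sum \<nu> T = 1 \<and> (\<Sum>v\<in>T. \<nu> v *\<^sub>R v) = q" by simp
  next
    assume h: "sum \<nu> T = 1 \<and> (\<Sum>v\<in>T. \<nu> v *\<^sub>R v) = q"
    show "\<forall>j\<in>UNIV. (\<Sum>v\<in>T. m j v * \<nu> v) = r j"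
    proof
      fix j :: "'n option"
      show "(\<Sum>v\<in>T. m j v * \<nu> v) = r j"
      proof (cases j)
        case None then show ?thesis using h by (simp add: m_def r_def)
      next
        case (Some i)
        have "(\<Sum>v\<in>T. \<nu> v *\<^sub>R v) $ i = q $ i" using h by simp
        then show ?thesis using Some by (simp add: m_def r_def mult.commute)
      qed
    qed
  qed
  show ?thesis
  proof (rule unique_sol_rat[of T UNIV m r u])
    show "finite T" by fact
    show "\<forall>j\<in>UNIV. \<forall>i\<in>T. m j i \<in> \<rat>"
      using Trat by (auto simp: m_def split: option.splits)
    show "\<forall>j\<in>UNIV. r j \<in> \<rat>"
      using qrat by (auto simp: r_def split: option.splits)
    show "\<forall>j\<in>UNIV. (\<Sum>i\<in>T. m j i * u i) = r j"
      using eqs s1 sq by blast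
    show "\<forall>\<nu>. (\<forall>j\<in>UNIV. (\<Sum>i\<in>T. m j i * \<nu> i) = r j) \<longrightarrow> (\<forall>i\<in>T. \<nu> i = u i)"
    proof (intro allI impI)
      fix \<nu> assume "\<forall>j\<in>UNIV. (\<Sum>i\<in>T. m j i * \<nu> i) = r j"
      then have \<nu>: "sum \<nu> T = 1" "(\<Sum>v\<in>T. \<nu> v *\<^sub>R v) = q" using eqs by blast+
      define w where "w = (\<lambda>v. \<nu> v - u v)"
      have "sum w T = 0" using \<nu> s1 by (simp add: w_def sum_subtractf)
      moreover have "(\<Sum>v\<in>T. w v *\<^sub>R v) = 0"
        using \<nu> sq by (simp add: w_def scaleR_diff_left sum_subtractf)
      ultimately have "\<not> (\<exists>v\<in>T. w v \<noteq> 0)"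
        using ind affine_dependent_explicit_finite[OF fin] by blast
      then show "\<forall>i\<in>T. \<nu> i = u i" by (simp add: w_def)
    qed
  qed
qed

lemma realv_rat: "\<forall>i. realv a $ i \<in> \<rat>"
  by (simp add: realv_def)

context cox_setup begin

lemma rcc:
  assumes q: "q \<in> P" and qrat: "\<forall>i. q$i \<in> \<rat>"
  shows "\<exists>D::nat. D > 0 \<and> (\<exists>\<beta>::int^'n \<Rightarrow> nat. sum \<beta> A = D \<and> (\<Sum>a\<in>A. real (\<beta> a) *\<^sub>R realv a) = real D *\<^sub>R q)"
proof -
  obtain T u where T: "finite T" "T \<subseteq> realv ` A" "\<not> affine_dependent T" "\<forall>x\<in>T. 0 \<le> u x"
    "sum u T = 1" "(\<Sum>v\<in>T. u v *\<^sub>R v) = q"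
    using cara_indep[of q "realv ` A"] q by (auto simp: convA_def)
  have urat: "\<forall>v\<in>T. u v \<in> \<rat>"
    by (rule bary_rat[OF T(1,3) _ qrat T(5,6)]) (use T(2) realv_rat in blast)
  obtain D :: nat where D: "D > 0" "\<forall>v\<in>T. of_nat D * u v \<in> \<int>"
    using common_denom[OF T(1) urat] by blast
  define A' where "A' = {a\<in>A. realv a \<in> T}"
  have TA': "T = realv ` A'" using T(2) by (auto simp: A'_def)
  have injA': "inj_on realv A'" using realv_inj by (rule inj_on_subset) simp
  define \<beta> where "\<beta> = (\<lambda>a. if a \<in> A' then nat \<lfloor>of_nat D * u (realv a)\<rfloor> else 0)"
  have \<beta>r: "real (\<beta> a) = (if a \<in> A' then of_nat D * u (realv a) else 0)" for a
  proof (cases "a \<in> A'")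
    case True
    then have "realv a \<in> T" by (simp add: A'_def)
    then have "of_nat D * u (realv a) \<in> \<int>" "of_nat D * u (realv a) \<ge> 0" using D T(4) by auto
    then show ?thesis using True by (simp add: \<beta>_def)
  qed (simp add: \<beta>_def)
  have A'A: "A' \<subseteq> A" by (auto simp: A'_def)
  have sumA: "(\<Sum>a\<in>A. g a) = (\<Sum>a\<in>A'. g a)" if "\<And>a. a \<in> A - A' \<Longrightarrow> g a = 0" for g :: "int^'n \<Rightarrow> 'z::comm_monoid_add"
    using that by (intro sum.mono_neutral_right[OF finA A'A]) auto
  have "real (sum \<beta> A) = (\<Sum>a\<in>A. real (\<beta> a))" by simp
  also have "\<dots> = (\<Sum>a\<in>A'. of_nat D * u (realv a))"
    by (subst sumA) (auto simp: \<beta>r)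
  also have "\<dots> = (\<Sum>v\<in>T. of_nat D * u v)" unfolding TA' by (rule sum.reindex[OF injA', symmetric, unfolded o_def])
  also have "\<dots> = real D" using T(5) by (simp add: sum_distrib_left[symmetric])
  finally have s: "sum \<beta> A = D" by linarith
  have "(\<Sum>a\<in>A. real (\<beta> a) *\<^sub>R realv a) = (\<Sum>a\<in>A'. (of_nat D * u (realv a)) *\<^sub>R realv a)"
    by (subst sumA) (auto simp: \<beta>r)
  also have "\<dots> = (\<Sum>v\<in>T. (of_nat D * u v) *\<^sub>R v)" unfolding TA' by (rule sum.reindex[OF injA', symmetric, unfolded o_def])
  also have "\<dots> = real D *\<^sub>R (\<Sum>v\<in>T. u v *\<^sub>R v)" by (simp add: scaleR_right.sum)
  also have "\<dots> = real D *\<^sub>R q" using T(6) by simp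
  finally show ?thesis using s D(1) by blast
qed

end

lemma pf_lim:
  assumes "p \<in> polyfun A" "\<forall>a\<in>A. (\<lambda>k. Y k a) \<longlonglongrightarrow> Z a"
  shows "(\<lambda>k. p (Y k)) \<longlonglongrightarrow> p Z"
  using assms
proof (induction rule: polyfun.induct)
  case (pconst c)
  then show ?case by simp
next
  case (pvar a)
  then show ?case by simp
next
  case (padd p q)
  then show ?case by (intro tendsto_add) auto
next
  case (pmult p q)
  then show ?case by (intro tendsto_mult) auto
qed

context cox_setup begin

definition Ym :: "((real^'n) set \<Rightarrow> real) \<Rightarrow> int^'n \<Rightarrow> complex" where
  "Ym x = (\<lambda>a. if a \<in> A then complex_of_real (mon x a) else 0)"

lemma mon_exp:
  assumes a: "a \<in> A"
  shows "mon (\<lambda>\<rho>. exp (l \<rho>)) a = exp (\<Sum>\<rho>\<in>R. of_int (idot (F \<rho>) a + b \<rho>) * l \<rho>)"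
proof -
  have "mon (\<lambda>\<rho>. exp (l \<rho>)) a = (\<Prod>\<rho>\<in>R. exp (of_int (idot (F \<rho>) a + b \<rho>) * l \<rho>))"
    unfolding mon_def
  proof (rule prod.cong[OF refl])
    fix \<rho> assume r: "\<rho> \<in> R"
    have k: "0 \<le> idot (F \<rho>) a + b \<rho>" using e_nonneg_int[OF a r] .
    have "exp (l \<rho>) ^ nat (idot (F \<rho>) a + b \<rho>) = exp (real (nat (idot (F \<rho>) a + b \<rho>)) * l \<rho>)"
      by (simp add: exp_of_nat_mult)
    also have "real (nat (idot (F \<rho>) a + b \<rho>)) = of_int (idot (F \<rho>) a + b \<rho>)" using k by simp
    finally show "exp (l \<rho>) ^ nat (idot (F \<rho>) a + b \<rho>) = exp (of_int (idot (F \<rho>) a + b \<rho>) * l \<rho>)" .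
  qed
  also have "\<dots> = exp (\<Sum>\<rho>\<in>R. of_int (idot (F \<rho>) a + b \<rho>) * l \<rho>)"
    using finR by (simp add: exp_sum)
  finally show ?thesis .
qed

lemma Ym_orbit:
  assumes pos: "\<forall>\<rho>\<in>R. x \<rho> > 0"
  shows "Ym x \<in> {y. \<exists>u t. u \<noteq> 0 \<and> (\<forall>i. t $ i \<noteq> 0) \<and> y = (\<lambda>a. if a \<in> A then u * lmono t a else 0)}"
proof -
  define l where "l = (\<lambda>\<rho>. ln (x \<rho>))"
  define s where "s = (\<lambda>i. (\<Sum>\<rho>\<in>R. of_int (F \<rho> $ i) * l \<rho>))"
  define u where "u = complex_of_real (exp (\<Sum>\<rho>\<in>R. of_int (b \<rho>) * l \<rho>))"
  define t :: "complex^'n" where "t = (\<chi> i. complex_of_real (exp (s i)))"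
  have u0: "u \<noteq> 0" by (simp add: u_def)
  have t0: "\<forall>i. t $ i \<noteq> 0" by (simp add: t_def)
  have "Ym x a = u * lmono t a" if a: "a \<in> A" for a
  proof -
    have xl: "mon x a = mon (\<lambda>\<rho>. exp (l \<rho>)) a"
      unfolding mon_def l_def using pos by (intro prod.cong refl) simp
    have "lmono t a = complex_of_real (\<Prod>i\<in>UNIV. exp (s i) powi (a $ i))"
      by (simp add: lmono_def t_def)
    also have "(\<Prod>i\<in>UNIV. exp (s i) powi (a $ i)) = (\<Prod>i\<in>UNIV. exp (of_int (a $ i) * s i))"
      by (simp add: exp_power_int)
    also have "\<dots> = exp (\<Sum>i\<in>UNIV. of_int (a $ i) * s i)" by (simp add: exp_sum)
    finally have lm: "lmono t a = complex_of_real (exp (\<Sum>i\<in>UNIV. of_int (a $ i) * s i))" .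
    have "(\<Sum>i\<in>UNIV. of_int (a $ i) * s i) = (\<Sum>i\<in>UNIV. \<Sum>\<rho>\<in>R. of_int (a $ i) * (of_int (F \<rho> $ i) * l \<rho>))"
      by (simp add: s_def sum_distrib_left)
    also have "\<dots> = (\<Sum>\<rho>\<in>R. \<Sum>i\<in>UNIV. of_int (a $ i) * (of_int (F \<rho> $ i) * l \<rho>))"
      by (rule sum.swap)
    also have "\<dots> = (\<Sum>\<rho>\<in>R. of_int (idot (F \<rho>) a) * l \<rho>)"
      by (intro sum.cong refl) (simp add: idot_def sum_distrib_right sum_distrib_left mult_ac)
    finally have ss: "(\<Sum>i\<in>UNIV. of_int (a $ i) * s i) = (\<Sum>\<rho>\<in>R. of_int (idot (F \<rho>) a) * l \<rho>)" .
    have "u * lmono t a = complex_of_real (exp ((\<Sum>\<rho>\<in>R. of_int (b \<rho>) * l \<rho>) + (\<Sum>\<rho>\<in>R. of_int (idot (F \<rho>) a) * l \<rho>)))"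
      by (simp add: u_def lm ss exp_add)
    also have "(\<Sum>\<rho>\<in>R. of_int (b \<rho>) * l \<rho>) + (\<Sum>\<rho>\<in>R. of_int (idot (F \<rho>) a) * l \<rho>) = (\<Sum>\<rho>\<in>R. of_int (idot (F \<rho>) a + b \<rho>) * l \<rho>)"
      by (simp add: sum.distrib[symmetric] algebra_simps)
    finally show ?thesis using a by (simp add: Ym_def xl mon_exp)
  qed
  then have "Ym x = (\<lambda>a. if a \<in> A then u * lmono t a else 0)"
    by (auto simp: Ym_def)
  then show ?thesis using u0 t0 by blast
qed

lemma Ym_in:
  assumes x: "x \<in> nonneg_orthant A"
  shows "Ym x \<in> Y_hat A"
  unfolding Y_hat_def zariski_closure_def
proof (intro CollectI conjI allI impI ballI)
  fix a assume "a \<notin> A" then show "Ym x a = 0" by (simp add: Ym_def)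
next
  fix p assume p: "p \<in> polyfun A"
    and van: "\<forall>s\<in>{y. \<exists>u t. u \<noteq> 0 \<and> (\<forall>i. t $ i \<noteq> 0) \<and> y = (\<lambda>a. if a \<in> A then u * lmono t a else 0)}. p s = 0"
  define xk where "xk = (\<lambda>k \<rho>. x \<rho> + inverse (real (Suc k)))"
  have xpos: "\<forall>\<rho>\<in>R. xk k \<rho> > 0" for k
    using x by (auto simp: xk_def nonneg_orthant_def intro: add_nonneg_pos)
  have zero: "p (Ym (xk k)) = 0" for k using van Ym_orbit[OF xpos] by blast
  have lim: "\<forall>a\<in>A. (\<lambda>k. Ym (xk k) a) \<longlonglongrightarrow> Ym x a"
  proof
    fix a assume a: "a \<in> A"
    have "(\<lambda>k. xk k \<rho>) \<longlonglongrightarrow> x \<rho>" for \<rho>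
      unfolding xk_def using tendsto_add[OF tendsto_const LIMSEQ_inverse_real_of_nat, of "x \<rho>"] by simp
    then have "(\<lambda>k. mon (xk k) a) \<longlonglongrightarrow> mon x a"
      unfolding mon_def by (intro tendsto_prod tendsto_power) auto
    then show "(\<lambda>k. Ym (xk k) a) \<longlonglongrightarrow> Ym x a"
      using a by (simp add: Ym_def tendsto_of_real)
  qed
  have "(\<lambda>k. p (Ym (xk k))) \<longlonglongrightarrow> p (Ym x)" by (rule pf_lim[OF p lim])
  then show "p (Ym x) = 0" using zero by (simp add: LIMSEQ_const_iff)
qed

lemma bin_real:
  fixes \<alpha> \<beta> :: "int^'n \<Rightarrow> nat" and r :: "int^'n \<Rightarrow> real"
  assumes y: "y \<in> Y_hat A" and yr: "\<forall>a\<in>A. y a = complex_of_real (r a)"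
    and deg: "(\<Sum>a\<in>A. \<alpha> a) = (\<Sum>a\<in>A. \<beta> a)"
    and mom: "\<forall>i. (\<Sum>a\<in>A. int (\<alpha> a) * a$i) = (\<Sum>a\<in>A. int (\<beta> a) * a$i)"
  shows "(\<Prod>a\<in>A. r a ^ \<alpha> a) = (\<Prod>a\<in>A. r a ^ \<beta> a)"
proof -
  have yk: "(\<Prod>a\<in>A. y a ^ k a) = (\<Prod>a\<in>A. complex_of_real (r a) ^ k a)" for k :: "int^'n \<Rightarrow> nat"
    using yr by (intro prod.cong refl) simp
  have "(\<Prod>a\<in>A. y a ^ \<alpha> a) = (\<Prod>a\<in>A. y a ^ \<beta> a)" by (rule bin_rel[OF finA y deg mom])
  then have "(\<Prod>a\<in>A. complex_of_real (r a) ^ \<alpha> a) = (\<Prod>a\<in>A. complex_of_real (r a) ^ \<beta> a)"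
    by (simp only: yk)
  then have "complex_of_real (\<Prod>a\<in>A. r a ^ \<alpha> a) = complex_of_real (\<Prod>a\<in>A. r a ^ \<beta> a)"
    by simp
  then show ?thesis by (simp only: of_real_eq_iff)
qed

lemma bin_log:
  fixes \<gamma> :: "int^'n \<Rightarrow> int" and r :: "int^'n \<Rightarrow> real"
  assumes y: "y \<in> Y_hat A" and yr: "\<forall>a\<in>A. y a = complex_of_real (r a)"
    and deg: "(\<Sum>a\<in>A. \<gamma> a) = 0"
    and mom: "\<forall>i. (\<Sum>a\<in>A. \<gamma> a * a$i) = 0"
    and pos: "\<forall>a\<in>A. \<gamma> a \<noteq> 0 \<longrightarrow> r a > 0"
  shows "(\<Sum>a\<in>A. of_int (\<gamma> a) * ln (r a)) = 0"
proof -
  define \<alpha> where "\<alpha> = (\<lambda>a. nat (\<gamma> a))"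
  define \<beta> where "\<beta> = (\<lambda>a. nat (- \<gamma> a))"
  have g: "\<gamma> a = int (\<alpha> a) - int (\<beta> a)" for a by (simp add: \<alpha>_def \<beta>_def)
  have deg': "(\<Sum>a\<in>A. \<alpha> a) = (\<Sum>a\<in>A. \<beta> a)"
  proof -
    have "(\<Sum>a\<in>A. int (\<alpha> a)) - (\<Sum>a\<in>A. int (\<beta> a)) = 0" using deg by (simp add: g sum_subtractf)
    then have "(\<Sum>a\<in>A. int (\<alpha> a)) = (\<Sum>a\<in>A. int (\<beta> a))" by simp
    then show ?thesis by (metis of_nat_eq_iff of_nat_sum)
  qed
  have mom': "\<forall>i. (\<Sum>a\<in>A. int (\<alpha> a) * a$i) = (\<Sum>a\<in>A. int (\<beta> a) * a$i)"
  proof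
    fix i
    have "(\<Sum>a\<in>A. int (\<alpha> a) * a$i) - (\<Sum>a\<in>A. int (\<beta> a) * a$i) = (\<Sum>a\<in>A. \<gamma> a * a$i)"
      by (simp add: g sum_subtractf left_diff_distrib)
    then show "(\<Sum>a\<in>A. int (\<alpha> a) * a$i) = (\<Sum>a\<in>A. int (\<beta> a) * a$i)" using mom by simp
  qed
  have eq: "(\<Prod>a\<in>A. r a ^ \<alpha> a) = (\<Prod>a\<in>A. r a ^ \<beta> a)" by (rule bin_real[OF y yr deg' mom'])
  have lnp: "ln (\<Prod>a\<in>A. r a ^ k a) = (\<Sum>a\<in>A. real (k a) * ln (r a))"
    if k: "\<forall>a\<in>A. k a \<noteq> 0 \<longrightarrow> r a > 0" for k :: "int^'n \<Rightarrow> nat"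
  proof -
    have nz: "r a ^ k a \<noteq> 0" if "a \<in> A" for a
      using k that by (cases "k a = 0") auto
    have "ln (\<Prod>a\<in>A. r a ^ k a) = (\<Sum>a\<in>A. ln (r a ^ k a))" by (rule ln_prod[OF finA nz])
    also have "\<dots> = (\<Sum>a\<in>A. real (k a) * ln (r a))"
    proof (rule sum.cong[OF refl])
      fix a assume "a \<in> A"
      then show "ln (r a ^ k a) = real (k a) * ln (r a)"
        using k by (cases "k a = 0") (auto simp: ln_realpow)
    qed
    finally show ?thesis .
  qed
  have "(\<Sum>a\<in>A. real (\<alpha> a) * ln (r a)) = (\<Sum>a\<in>A. real (\<beta> a) * ln (r a))"
    using lnp[of \<alpha>] lnp[of \<beta>] eq pos by (auto simp: \<alpha>_def \<beta>_def)
  then have "(\<Sum>a\<in>A. real (\<alpha> a) * ln (r a)) - (\<Sum>a\<in>A. real (\<beta> a) * ln (r a)) = 0" by simp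
  moreover have "(\<Sum>a\<in>A. real (\<alpha> a) * ln (r a)) - (\<Sum>a\<in>A. real (\<beta> a) * ln (r a)) = (\<Sum>a\<in>A. of_int (\<gamma> a) * ln (r a))"
    by (simp add: g sum_subtractf left_diff_distrib)
  ultimately show ?thesis by simp
qed

end

context cox_setup begin

lemma ray_in_P_zero:
  assumes h: "\<forall>sc\<ge>0. x0 + sc *\<^sub>R d \<in> P"
  shows "d = 0"
proof (rule ccontr)
  assume d: "d \<noteq> 0"
  have "bounded P" using compactP compact_imp_bounded by blast
  then obtain B where B: "\<forall>x\<in>P. norm x \<le> B" by (auto simp: bounded_iff)
  define sc where "sc = (B + norm x0 + 1) / norm d"
  have nd: "norm d > 0" using d by simp
  have "x0 \<in> P" using h[rule_format, of 0] by simp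
  then have "norm x0 \<le> B" using B by blast
  then have B0: "B \<ge> 0" using norm_ge_zero[of x0] by linarith
  have l0: "sc \<ge> 0" using nd B0 by (simp add: sc_def)
  have "norm (sc *\<^sub>R d) = B + norm x0 + 1" using nd B0 by (simp add: sc_def abs_of_nonneg)
  moreover have "norm (sc *\<^sub>R d) \<le> norm (x0 + sc *\<^sub>R d) + norm x0"
    using norm_triangle_ineq4[of "x0 + sc *\<^sub>R d" x0] by simp
  moreover have "norm (x0 + sc *\<^sub>R d) \<le> B" using B h l0 by blast
  ultimately show False by linarith
qed

lemma INJ:
  assumes h: "\<forall>\<rho>\<in>R. fv \<rho> \<bullet> p + of_int (b \<rho>) * t = 0"
  shows "p = 0 \<and> t = 0"
proof -
  obtain a0 where a0: "a0 \<in> P" using P_ne by blast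
  show ?thesis
  proof (cases "t = 0")
    case True
    have "\<forall>sc\<ge>0. a0 + sc *\<^sub>R p \<in> P"
    proof (intro allI impI)
      fix sc :: real
      have "\<forall>\<rho>\<in>R. e \<rho> (a0 + sc *\<^sub>R p) = e \<rho> a0"
        using h True by (simp add: e_def inner_add_right)
      then show "a0 + sc *\<^sub>R p \<in> P" using a0 inP by auto
    qed
    then show ?thesis using ray_in_P_zero True by blast
  next
    case False
    define q0 where "q0 = (1 / t) *\<^sub>R p"
    have eq0: "\<forall>\<rho>\<in>R. e \<rho> q0 = 0"
    proof
      fix \<rho> assume "\<rho> \<in> R"
      then have "fv \<rho> \<bullet> p + of_int (b \<rho>) * t = 0" using h by blast
      then have "(fv \<rho> \<bullet> p + of_int (b \<rho>) * t) / t = 0" by simp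
      then show "e \<rho> q0 = 0" using False by (simp add: e_def q0_def add_divide_distrib)
    qed
    have "a = q0" if a: "a \<in> P" for a
    proof -
      have "\<forall>sc\<ge>0. q0 + sc *\<^sub>R (a - q0) \<in> P"
      proof (intro allI impI)
        fix sc :: real assume l: "sc \<ge> 0"
        have "\<forall>\<rho>\<in>R. e \<rho> (q0 + sc *\<^sub>R (a - q0)) = sc * e \<rho> a"
        proof
          fix \<rho> assume r: "\<rho> \<in> R"
          have "e \<rho> (q0 + sc *\<^sub>R (a - q0)) = e \<rho> q0 + sc * (e \<rho> a - e \<rho> q0)"
            by (simp add: e_def inner_add_right inner_diff_right algebra_simps)
          then show "e \<rho> (q0 + sc *\<^sub>R (a - q0)) = sc * e \<rho> a" using eq0 r by simp
        qed
        then show "q0 + sc *\<^sub>R (a - q0) \<in> P" using a inP l by auto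
      qed
      then have "a - q0 = 0" by (rule ray_in_P_zero)
      then show ?thesis by simp
    qed
    then have "P \<subseteq> {q0}" by blast
    then have "aff_dim P \<le> aff_dim {q0}" by (rule aff_dim_subset)
    then show ?thesis using dimA by simp
  qed
qed

definition Wv :: "(real^'n) set \<Rightarrow> (real^'n) \<times> real" where
  "Wv \<rho> = (fv \<rho>, real_of_int (b \<rho>))"

lemma span_Wv: "span (Wv ` R) = UNIV"
proof (rule ccontr)
  assume "span (Wv ` R) \<noteq> UNIV"
  then obtain a where a: "a \<noteq> 0" "\<forall>x\<in>span (Wv ` R). a \<bullet> x = 0"
    using span_not_UNIV_orthogonal by blast
  obtain p t where pt: "a = (p, t)" by (cases a)
  have "\<forall>\<rho>\<in>R. fv \<rho> \<bullet> p + of_int (b \<rho>) * t = 0"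
  proof
    fix \<rho> assume "\<rho> \<in> R"
    then have "a \<bullet> Wv \<rho> = 0" using a(2) span_base by blast
    then show "fv \<rho> \<bullet> p + of_int (b \<rho>) * t = 0" by (simp add: pt Wv_def inner_commute mult.commute)
  qed
  then have "p = 0 \<and> t = 0" by (rule INJ)
  then show False using a pt by (simp add: zero_prod_def)
qed

lemma span_rep:
  assumes "w \<in> span (Wv ` R)"
  shows "\<exists>z. w = (\<Sum>\<rho>\<in>R. z \<rho> *\<^sub>R Wv \<rho>)"
  using assms
proof (induction rule: span_induct)
  case base
  show ?case unfolding subspace_def
  proof (intro conjI ballI allI)
    show "0 \<in> Collect (\<lambda>w. \<exists>z. w = (\<Sum>\<rho>\<in>R. z \<rho> *\<^sub>R Wv \<rho>))"
      by (auto intro: exI[of _ "\<lambda>_. 0"])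
  next
    fix x y assume "x \<in> Collect (\<lambda>w. \<exists>z. w = (\<Sum>\<rho>\<in>R. z \<rho> *\<^sub>R Wv \<rho>))"
      "y \<in> Collect (\<lambda>w. \<exists>z. w = (\<Sum>\<rho>\<in>R. z \<rho> *\<^sub>R Wv \<rho>))"
    then obtain z1 z2 where "x = (\<Sum>\<rho>\<in>R. z1 \<rho> *\<^sub>R Wv \<rho>)" "y = (\<Sum>\<rho>\<in>R. z2 \<rho> *\<^sub>R Wv \<rho>)" by auto
    then have "x + y = (\<Sum>\<rho>\<in>R. (z1 \<rho> + z2 \<rho>) *\<^sub>R Wv \<rho>)"
      by (simp add: scaleR_add_left sum.distrib)
    then show "x + y \<in> Collect (\<lambda>w. \<exists>z. w = (\<Sum>\<rho>\<in>R. z \<rho> *\<^sub>R Wv \<rho>))"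
      by (intro CollectI exI[where x="\<lambda>\<rho>. z1 \<rho> + z2 \<rho>"])
  next
    fix c :: real and x assume "x \<in> Collect (\<lambda>w. \<exists>z. w = (\<Sum>\<rho>\<in>R. z \<rho> *\<^sub>R Wv \<rho>))"
    then obtain z1 where "x = (\<Sum>\<rho>\<in>R. z1 \<rho> *\<^sub>R Wv \<rho>)" by auto
    then have "c *\<^sub>R x = (\<Sum>\<rho>\<in>R. (c * z1 \<rho>) *\<^sub>R Wv \<rho>)"
      by (simp add: scaleR_right.sum)
    then show "c *\<^sub>R x \<in> Collect (\<lambda>w. \<exists>z. w = (\<Sum>\<rho>\<in>R. z \<rho> *\<^sub>R Wv \<rho>))"
      by (intro CollectI exI[where x="\<lambda>\<rho>. c * z1 \<rho>"])
  qed
next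
  case (step x)
  then obtain \<rho>0 where r0: "\<rho>0 \<in> R" "x = Wv \<rho>0" by blast
  have "(\<Sum>\<rho>\<in>R. (if \<rho> = \<rho>0 then 1 else 0) *\<^sub>R Wv \<rho>) = (\<Sum>\<rho>\<in>R. if \<rho> = \<rho>0 then Wv \<rho> else 0)"
    by (intro sum.cong) auto
  also have "\<dots> = Wv \<rho>0" using r0 finR by (simp add: sum.delta)
  finally have "(\<Sum>\<rho>\<in>R. (if \<rho> = \<rho>0 then 1 else 0) *\<^sub>R Wv \<rho>) = Wv \<rho>0" .
  then show ?case using r0 by metis
qed

lemma lin_rep:
  fixes g :: "(real^'n) \<times> real \<Rightarrow> real"
  assumes "linear g"
  shows "g v = (\<Sum>i\<in>Basis. g i *\<^sub>R i) \<bullet> v"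
proof -
  have "g v = g (\<Sum>i\<in>Basis. (v \<bullet> i) *\<^sub>R i)" by (simp add: euclidean_representation)
  also have "\<dots> = (\<Sum>i\<in>Basis. (v \<bullet> i) * g i)"
    using assms by (simp add: real_vector.linear_sum real_vector.linear_scale)
  also have "\<dots> = (\<Sum>i\<in>Basis. g i *\<^sub>R i) \<bullet> v"
    by (simp add: inner_sum_right inner_commute mult.commute)
  finally show ?thesis .
qed

lemma zexist:
  fixes Bs :: "(int^'n) set" and f :: "int^'n \<Rightarrow> real"
  assumes finB: "finite Bs" and ind: "\<not> affine_dependent (realv ` Bs)"
  shows "\<exists>z. \<forall>c\<in>Bs. f c = (\<Sum>\<rho>\<in>R. z \<rho> * e \<rho> (realv c))"
proof -
  define W where "W = (\<lambda>c::int^'n. (realv c, 1::real))"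
  have injW: "inj_on W Bs"
  proof (rule inj_onI)
    fix x y assume "W x = W y"
    then have "realv x = realv y" by (simp add: W_def)
    then show "x = y" by (rule injD[OF realv_inj])
  qed
  have injr: "inj_on realv Bs" using realv_inj by (rule inj_on_subset) simp
  have indep: "independent (W ` Bs)"
  proof
    assume "dependent (W ` Bs)"
    then have "\<exists>u. (\<exists>v\<in>W ` Bs. u v \<noteq> 0) \<and> (\<Sum>v\<in>W ` Bs. u v *\<^sub>R v) = 0"
      by (simp only: real_vector.dependent_finite[OF finite_imageI[OF finB]])
    then obtain u where u: "\<exists>v\<in>W ` Bs. u v \<noteq> 0" "(\<Sum>v\<in>W ` Bs. u v *\<^sub>R v) = 0"
      by blast
    have "(\<Sum>c\<in>Bs. u (W c) *\<^sub>R W c) = (\<Sum>v\<in>W ` Bs. u v *\<^sub>R v)"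
      by (simp add: sum.reindex[OF injW])
    then have "(\<Sum>c\<in>Bs. u (W c) *\<^sub>R W c) = 0" using u(2) by simp
    then have s1: "(\<Sum>c\<in>Bs. u (W c) *\<^sub>R realv c) = 0" and s2: "(\<Sum>c\<in>Bs. u (W c)) = 0"
      using fst_sum[of "\<lambda>c. u (W c) *\<^sub>R W c" Bs] snd_sum[of "\<lambda>c. u (W c) *\<^sub>R W c" Bs]
      by (simp_all add: W_def)
    define U where "U = (\<lambda>x. u (x, 1))"
    have "(\<Sum>x\<in>realv ` Bs. U x *\<^sub>R x) = (\<Sum>c\<in>Bs. u (W c) *\<^sub>R realv c)"
      by (simp add: sum.reindex[OF injr] U_def W_def)
    then have "(\<Sum>x\<in>realv ` Bs. U x *\<^sub>R x) = 0" using s1 by simp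
    moreover have "sum U (realv ` Bs) = (\<Sum>c\<in>Bs. u (W c))"
      by (simp add: sum.reindex[OF injr] U_def W_def)
    then have "sum U (realv ` Bs) = 0" using s2 by simp
    moreover have "\<exists>x\<in>realv ` Bs. U x \<noteq> 0" using u(1) by (auto simp: U_def W_def)
    ultimately have "affine_dependent (realv ` Bs)"
      unfolding affine_dependent_explicit_finite[OF finite_imageI[OF finB]] by blast
    then show False using ind by blast
  qed
  obtain g where g: "linear g" "\<forall>x\<in>W ` Bs. g x = f (inv realv (fst x))"
    using real_vector.linear_independent_extend[OF indep, of "\<lambda>x. f (inv realv (fst x))"] by blast
  define w where "w = (\<Sum>i\<in>Basis. g i *\<^sub>R i)"
  have gw: "g v = w \<bullet> v" for v unfolding w_def by (rule lin_rep[OF g(1)])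
  have "\<exists>z. w = (\<Sum>\<rho>\<in>R. z \<rho> *\<^sub>R Wv \<rho>)" using span_rep[of w] span_Wv by simp
  then obtain z where z: "w = (\<Sum>\<rho>\<in>R. z \<rho> *\<^sub>R Wv \<rho>)" by blast
  have "f c = (\<Sum>\<rho>\<in>R. z \<rho> * e \<rho> (realv c))" if c: "c \<in> Bs" for c
  proof -
    have "g (W c) = f (inv realv (fst (W c)))" using g(2) c by blast
    then have "f c = g (W c)" by (simp add: W_def inv_f_f[OF realv_inj])
    also have "\<dots> = w \<bullet> W c" by (rule gw)
    also have "\<dots> = (\<Sum>\<rho>\<in>R. z \<rho> * (Wv \<rho> \<bullet> W c))" by (simp add: z inner_sum_left)
    also have "\<dots> = (\<Sum>\<rho>\<in>R. z \<rho> * e \<rho> (realv c))" by (simp add: Wv_def W_def e_def)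
    finally show ?thesis .
  qed
  then show ?thesis by blast
qed

end

context cox_setup begin

lemma e_sum_affine:
  assumes "finite C" "sum \<mu> C = 1"
  shows "e \<rho> (\<Sum>c\<in>C. \<mu> c *\<^sub>R realv c) = (\<Sum>c\<in>C. \<mu> c * e \<rho> (realv c))"
proof -
  have "e \<rho> (\<Sum>c\<in>C. \<mu> c *\<^sub>R realv c) = (\<Sum>c\<in>C. \<mu> c * (fv \<rho> \<bullet> realv c)) + (\<Sum>c\<in>C. \<mu> c) * of_int (b \<rho>)"
    using assms by (simp add: e_def inner_sum_right)
  also have "\<dots> = (\<Sum>c\<in>C. \<mu> c * e \<rho> (realv c))"
    by (simp add: e_def distrib_left sum.distrib sum_distrib_right)
  finally show ?thesis .
qed

lemma val_lemma:
  fixes r :: "int^'n \<Rightarrow> real"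
  assumes y: "y \<in> Y_hat A" and yr: "\<forall>a\<in>A. y a = complex_of_real (r a)"
    and SA: "S \<subseteq> A" and Spos: "\<forall>s\<in>S. r s > 0"
  shows "\<exists>z. \<forall>s\<in>S. ln (r s) = (\<Sum>\<rho>\<in>R. z \<rho> * e \<rho> (realv s))"
proof -
  have finS: "finite S" using SA finA finite_subset by blast
  obtain Bv where Bv: "Bv \<subseteq> realv ` S" "\<not> affine_dependent Bv" "affine hull (realv ` S) = affine hull Bv"
    using affine_basis_exists[of "realv ` S"] by blast
  define Bs where "Bs = {c\<in>S. realv c \<in> Bv}"
  have BvBs: "Bv = realv ` Bs" using Bv(1) by (auto simp: Bs_def)
  have BsS: "Bs \<subseteq> S" by (auto simp: Bs_def)
  have finBs: "finite Bs" using finS BsS finite_subset by blast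
  have finBv: "finite Bv" using BvBs finBs by simp
  have injBs: "inj_on realv Bs" using realv_inj by (rule inj_on_subset) simp
  obtain z where z: "\<forall>c\<in>Bs. ln (r c) = (\<Sum>\<rho>\<in>R. z \<rho> * e \<rho> (realv c))"
    using zexist[OF finBs, of "\<lambda>c. ln (r c)"] Bv(2) BvBs by blast
  have "ln (r s) = (\<Sum>\<rho>\<in>R. z \<rho> * e \<rho> (realv s))" if s: "s \<in> S" for s
  proof -
    have "realv s \<in> affine hull Bv" using Bv(3) s hull_inc[of "realv s" "realv ` S"] by blast
    then obtain \<mu> where \<mu>: "sum \<mu> Bv = 1" "(\<Sum>v\<in>Bv. \<mu> v *\<^sub>R v) = realv s"
      using affine_hull_finite[OF finBv] by blast
    have \<mu>rat: "\<forall>v\<in>Bv. \<mu> v \<in> \<rat>"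
      by (rule bary_rat[OF finBv Bv(2) _ realv_rat \<mu>]) (use BvBs realv_rat in blast)
    obtain D :: nat where D: "D > 0" "\<forall>v\<in>Bv. of_nat D * \<mu> v \<in> \<int>"
      using common_denom[OF finBv \<mu>rat] by blast
    define di where "di = (\<lambda>c. \<lfloor>of_nat D * \<mu> (realv c)\<rfloor>)"
    have di: "of_int (di c) = of_nat D * \<mu> (realv c)" if "c \<in> Bs" for c
      using D(2) that BvBs by (auto simp: di_def elim!: Ints_cases)
    have "(\<Sum>c\<in>Bs. \<mu> (realv c)) = sum \<mu> Bv" by (simp add: BvBs sum.reindex[OF injBs])
    then have sBs1: "(\<Sum>c\<in>Bs. \<mu> (realv c)) = 1" using \<mu>(1) by simp
    have "(\<Sum>c\<in>Bs. \<mu> (realv c) *\<^sub>R realv c) = (\<Sum>v\<in>Bv. \<mu> v *\<^sub>R v)" by (simp add: BvBs sum.reindex[OF injBs])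
    then have sBs2: "(\<Sum>c\<in>Bs. \<mu> (realv c) *\<^sub>R realv c) = realv s" using \<mu>(2) by simp
    define \<gamma> where "\<gamma> = (\<lambda>c. (if c = s then int D else 0) - (if c \<in> Bs then di c else 0))"
    have sA: "s \<in> A" using s SA by blast
    have BsA: "Bs \<subseteq> A" using BsS SA by blast
    have sumA: "(\<Sum>c\<in>A. (if c = s then g c else 0) - (if c \<in> Bs then h c else 0)) = g s - (\<Sum>c\<in>Bs. h c)"
      for g h :: "int^'n \<Rightarrow> 'z::ab_group_add"
      using sA BsA finA by (simp add: sum_subtractf sum.If_cases Int_absorb1 Int_commute)
    have deg: "(\<Sum>c\<in>A. \<gamma> c) = 0"
    proof -
      have "real_of_int (\<Sum>c\<in>A. \<gamma> c) = real D - (\<Sum>c\<in>Bs. of_int (di c))"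
        unfolding \<gamma>_def by (simp only: of_int_sum of_int_diff sumA[of "\<lambda>c. int D" di] )
      also have "\<dots> = real D - (\<Sum>c\<in>Bs. real D * \<mu> (realv c))" using di by simp
      also have "\<dots> = 0" using sBs1 by (simp add: sum_distrib_left[symmetric])
      finally show ?thesis by (simp only: of_int_eq_0_iff)
    qed
    have mom: "\<forall>i. (\<Sum>c\<in>A. \<gamma> c * c$i) = 0"
    proof
      fix i
      have "real_of_int (\<Sum>c\<in>A. \<gamma> c * c$i) = real D * of_int (s$i) - (\<Sum>c\<in>Bs. of_int (di c) * of_int (c$i))"
      proof -
        have "(\<Sum>c\<in>A. \<gamma> c * c$i) = (\<Sum>c\<in>A. (if c = s then int D * c$i else 0) - (if c \<in> Bs then di c * c$i else 0))"
          unfolding \<gamma>_def by (intro sum.cong refl) (auto simp: left_diff_distrib)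
        also have "\<dots> = int D * s$i - (\<Sum>c\<in>Bs. di c * c$i)" by (rule sumA)
        finally show ?thesis by simp
      qed
      also have "\<dots> = real D * realv s $ i - (\<Sum>c\<in>Bs. real D * (\<mu> (realv c) * realv c $ i))"
        using di by (simp add: realv_def mult.assoc)
      also have "\<dots> = real D * (realv s $ i - (\<Sum>c\<in>Bs. \<mu> (realv c) *\<^sub>R realv c) $ i)"
        by (simp add: sum_distrib_left right_diff_distrib)
      also have "\<dots> = 0" using sBs2 by simp
      finally show "(\<Sum>c\<in>A. \<gamma> c * c$i) = 0" by (simp only: of_int_eq_0_iff)
    qed
    have pos: "\<forall>c\<in>A. \<gamma> c \<noteq> 0 \<longrightarrow> r c > 0"
    proof (intro ballI impI)
      fix c assume "c \<in> A" "\<gamma> c \<noteq> 0"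
      then have "c = s \<or> c \<in> Bs" by (auto simp: \<gamma>_def split: if_splits)
      then show "r c > 0" using s BsS Spos by blast
    qed
    have L: "(\<Sum>c\<in>A. of_int (\<gamma> c) * ln (r c)) = 0" by (rule bin_log[OF y yr deg mom pos])
    have "(\<Sum>c\<in>A. of_int (\<gamma> c) * ln (r c)) = real D * ln (r s) - (\<Sum>c\<in>Bs. of_int (di c) * ln (r c))"
    proof -
      have "(\<Sum>c\<in>A. of_int (\<gamma> c) * ln (r c)) = (\<Sum>c\<in>A. (if c = s then real D * ln (r c) else 0) - (if c \<in> Bs then of_int (di c) * ln (r c) else 0))"
        unfolding \<gamma>_def by (intro sum.cong refl) (auto simp: left_diff_distrib)
      also have "\<dots> = real D * ln (r s) - (\<Sum>c\<in>Bs. of_int (di c) * ln (r c))" by (rule sumA)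
      finally show ?thesis .
    qed
    also have "\<dots> = real D * (ln (r s) - (\<Sum>c\<in>Bs. \<mu> (realv c) * ln (r c)))"
      using di by (simp add: right_diff_distrib sum_distrib_left mult.assoc)
    finally have "ln (r s) = (\<Sum>c\<in>Bs. \<mu> (realv c) * ln (r c))" using L D(1) by simp
    also have "\<dots> = (\<Sum>c\<in>Bs. \<mu> (realv c) * (\<Sum>\<rho>\<in>R. z \<rho> * e \<rho> (realv c)))" using z by simp
    also have "\<dots> = (\<Sum>\<rho>\<in>R. z \<rho> * (\<Sum>c\<in>Bs. \<mu> (realv c) * e \<rho> (realv c)))"
      by (simp add: sum_distrib_left sum.swap[of _ Bs R] mult_ac)
    also have "\<dots> = (\<Sum>\<rho>\<in>R. z \<rho> * e \<rho> (realv s))"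
      using e_sum_affine[OF finBs sBs1] sBs2 by simp
    finally show ?thesis .
  qed
  then show ?thesis by blast
qed

end

lemma sum_if_sub:
  assumes "finite A" "S \<subseteq> A"
  shows "(\<Sum>c\<in>A. if c \<in> S then g c else 0) = sum g S"
proof -
  have "(\<Sum>c\<in>A. if c \<in> S then g c else 0) = (\<Sum>c\<in>S. if c \<in> S then g c else 0)"
    using assms by (intro sum.mono_neutral_right) auto
  also have "\<dots> = sum g S" by simp
  finally show ?thesis .
qed

context cox_setup begin

lemma supp_lemma:
  fixes r :: "int^'n \<Rightarrow> real"
  assumes y: "y \<in> Y_hat A" and yr: "\<forall>a\<in>A. y a = complex_of_real (r a)"
    and r0: "\<forall>a\<in>A. r a \<ge> 0" and Sdef: "S = {a\<in>A. r a > 0}" and Sne: "S \<noteq> {}"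
    and a: "a \<in> A" and hK: "\<forall>\<rho>\<in>R. (\<forall>s\<in>S. e \<rho> (realv s) = 0) \<longrightarrow> e \<rho> (realv a) = 0"
  shows "r a > 0"
proof -
  have SA: "S \<subseteq> A" using Sdef by blast
  have finS: "finite S" using SA finA finite_subset by blast
  define ki where "ki = (\<lambda>\<rho> c. idot (F \<rho>) c + b \<rho>)"
  have eki: "e \<rho> (realv c) = of_int (ki \<rho> c)" for \<rho> c by (simp add: e_realv ki_def)
  have ki0: "\<rho> \<in> R \<Longrightarrow> c \<in> A \<Longrightarrow> 0 \<le> ki \<rho> c" for \<rho> c using e_nonneg_int by (simp add: ki_def)
  define E where "E = (\<Sum>\<rho>\<in>R. ki \<rho> a)"
  have kiE: "ki \<rho> a \<le> E" if "\<rho> \<in> R" for \<rho>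
    unfolding E_def using that ki0[OF _ a] finR by (intro member_le_sum) auto
  define N :: nat where "N = nat E + 2"
  have NE: "real_of_int (ki \<rho> a) < real N" if "\<rho> \<in> R" for \<rho>
    using kiE[OF that] by (simp add: N_def)
  define n where "n = card S"
  have n1: "n \<ge> 1" using finS Sne by (simp add: n_def Suc_le_eq card_gt_0_iff)
  define m :: nat where "m = N * n - 1"
  have Nn: "N * n \<ge> 2" using n1 by (simp add: N_def)
  have mr: "real m = real N * real n - 1"
  proof -
    have "1 \<le> N * n" using Nn by linarith
    then have "real (N * n - 1) = real (N * n) - real 1" by (rule of_nat_diff)
    then show ?thesis by (simp add: m_def)
  qed
  have mpos: "real m > 0" using Nn by (simp add: m_def)
  define q where "q = (1 / real m) *\<^sub>R (real N *\<^sub>R (\<Sum>s\<in>S. realv s) - realv a)"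
  have eq: "e \<rho> q = (real N * (\<Sum>s\<in>S. e \<rho> (realv s)) - e \<rho> (realv a)) / real m" for \<rho>
  proof -
    define Sf where "Sf = (\<Sum>s\<in>S. fv \<rho> \<bullet> realv s)"
    have "fv \<rho> \<bullet> q = (real N * Sf - fv \<rho> \<bullet> realv a) / real m"
      by (simp add: q_def Sf_def inner_diff_right inner_sum_right)
    moreover have "(\<Sum>s\<in>S. e \<rho> (realv s)) = Sf + real n * of_int (b \<rho>)"
      by (simp add: e_def Sf_def sum.distrib n_def)
    ultimately show ?thesis using mpos
      by (simp add: e_def field_simps mr)
  qed
  have qP: "q \<in> P" unfolding inP
  proof
    fix \<rho> assume r: "\<rho> \<in> R"
    show "0 \<le> e \<rho> q"
    proof (cases "\<forall>s\<in>S. e \<rho> (realv s) = 0")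
      case True
      then have "e \<rho> (realv a) = 0" using hK r by blast
      then show ?thesis using True by (simp add: eq)
    next
      case False
      then obtain s0 where s0: "s0 \<in> S" "e \<rho> (realv s0) \<noteq> 0" by blast
      have "ki \<rho> s0 \<ge> 1" using s0 ki0[OF r] SA eki[of \<rho> s0] by (smt (verit) of_int_0 subsetD)
      moreover have "ki \<rho> s0 \<le> (\<Sum>s\<in>S. ki \<rho> s)"
        by (rule member_le_sum[OF s0(1) _ finS]) (use ki0[OF r] SA in blast)
      ultimately have "1 \<le> (\<Sum>s\<in>S. ki \<rho> s)" by linarith
      then have "(1::real) \<le> of_int (\<Sum>s\<in>S. ki \<rho> s)" by linarith
      then have "1 \<le> (\<Sum>s\<in>S. e \<rho> (realv s))" by (simp add: eki)
      then have "real N \<le> real N * (\<Sum>s\<in>S. e \<rho> (realv s))"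
        using mult_left_mono[of 1 "\<Sum>s\<in>S. e \<rho> (realv s)" "real N"] by simp
      moreover have "e \<rho> (realv a) < real N" using NE[OF r] by (simp add: eki)
      ultimately show ?thesis using mpos by (simp add: eq)
    qed
  qed
  have qrat: "\<forall>i. q$i \<in> \<rat>"
  proof
    fix i
    have "q $ i = (real N * (\<Sum>s\<in>S. of_int (s$i)) - of_int (a$i)) / real m"
      by (simp add: q_def realv_def)
    also have "\<dots> \<in> \<rat>" by (intro Rats_divide Rats_diff Rats_mult Rats_sum) auto
    finally show "q$i \<in> \<rat>" .
  qed
  obtain D :: nat and \<beta> :: "int^'n \<Rightarrow> nat" where D: "D > 0" "sum \<beta> A = D"
    "(\<Sum>c\<in>A. real (\<beta> c) *\<^sub>R realv c) = real D *\<^sub>R q"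
    using rcc[OF qP qrat] by blast
  have mq: "real m *\<^sub>R q = real N *\<^sub>R (\<Sum>s\<in>S. realv s) - realv a"
    using mpos by (simp add: q_def)
  have comp: "real m * (\<Sum>c\<in>A. real (\<beta> c) * of_int (c$i)) = real D * real N * (\<Sum>s\<in>S. of_int (s$i)) - real D * of_int (a$i)" for i
  proof -
    have "real m *\<^sub>R (\<Sum>c\<in>A. real (\<beta> c) *\<^sub>R realv c) = real D *\<^sub>R (real m *\<^sub>R q)" using D(3) by simp
    also have "\<dots> = real D *\<^sub>R (real N *\<^sub>R (\<Sum>s\<in>S. realv s) - realv a)" by (simp only: mq)
    finally have "(real m *\<^sub>R (\<Sum>c\<in>A. real (\<beta> c) *\<^sub>R realv c)) $ i = (real D *\<^sub>R (real N *\<^sub>R (\<Sum>s\<in>S. realv s) - realv a)) $ i"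
      by simp
    then show ?thesis by (simp add: realv_def right_diff_distrib mult.assoc)
  qed
  define \<alpha> where "\<alpha> = (\<lambda>c. (if c = a then D else 0) + m * \<beta> c)"
  define \<beta>' where "\<beta>' = (\<lambda>c. if c \<in> S then D * N else 0)"
  have deg: "(\<Sum>c\<in>A. \<alpha> c) = (\<Sum>c\<in>A. \<beta>' c)"
  proof -
    have "(\<Sum>c\<in>A. \<alpha> c) = D + m * D"
      using a finA D(2) by (simp add: \<alpha>_def sum.distrib sum_distrib_left[symmetric])
    also have "\<dots> = D * (m + 1)" by simp
    also have "m + 1 = N * n" using Nn by (simp add: m_def)
    also have "D * (N * n) = (\<Sum>c\<in>A. \<beta>' c)"
      unfolding \<beta>'_def using sum_if_sub[OF finA SA, of "\<lambda>_. D * N"] by (simp add: n_def)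
    finally show ?thesis .
  qed
  have mom: "\<forall>i. (\<Sum>c\<in>A. int (\<alpha> c) * c$i) = (\<Sum>c\<in>A. int (\<beta>' c) * c$i)"
  proof
    fix i
    have L: "(\<Sum>c\<in>A. int (\<alpha> c) * c$i) = int D * a$i + int m * (\<Sum>c\<in>A. int (\<beta> c) * c$i)"
    proof -
      have "(\<Sum>c\<in>A. int (\<alpha> c) * c$i) = (\<Sum>c\<in>A. (if c = a then int D * c$i else 0) + int m * (int (\<beta> c) * c$i))"
        by (intro sum.cong refl) (simp add: \<alpha>_def distrib_right mult.assoc)
      also have "\<dots> = int D * a$i + int m * (\<Sum>c\<in>A. int (\<beta> c) * c$i)"
        using a finA by (simp add: sum.distrib sum_distrib_left)
      finally show ?thesis .
    qed
    have Rr: "(\<Sum>c\<in>A. int (\<beta>' c) * c$i) = int D * int N * (\<Sum>s\<in>S. s$i)"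
    proof -
      have "(\<Sum>c\<in>A. int (\<beta>' c) * c$i) = (\<Sum>c\<in>A. if c \<in> S then int D * int N * c$i else 0)"
        by (intro sum.cong refl) (simp add: \<beta>'_def)
      also have "\<dots> = (\<Sum>s\<in>S. int D * int N * s$i)" by (rule sum_if_sub[OF finA SA])
      finally show ?thesis by (simp add: sum_distrib_left)
    qed
    have "real_of_int (int D * a$i + int m * (\<Sum>c\<in>A. int (\<beta> c) * c$i)) = real_of_int (int D * int N * (\<Sum>s\<in>S. s$i))"
      using comp[of i] by simp
    then show "(\<Sum>c\<in>A. int (\<alpha> c) * c$i) = (\<Sum>c\<in>A. int (\<beta>' c) * c$i)"
      unfolding L Rr by (simp only: of_int_eq_iff)
  qed
  have pe: "(\<Prod>c\<in>A. r c ^ \<alpha> c) = (\<Prod>c\<in>A. r c ^ \<beta>' c)" by (rule bin_real[OF y yr deg mom])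
  have "(\<Prod>c\<in>A. r c ^ \<beta>' c) > 0"
  proof (rule prod_pos)
    fix c assume "c \<in> A"
    show "0 < r c ^ \<beta>' c" by (cases "c \<in> S") (auto simp: \<beta>'_def Sdef)
  qed
  then have "(\<Prod>c\<in>A. r c ^ \<alpha> c) \<noteq> 0" using pe by simp
  then have "r a ^ \<alpha> a \<noteq> 0" using a finA by (simp add: prod_zero_iff)
  moreover have "\<alpha> a > 0" using D(1) by (simp add: \<alpha>_def)
  ultimately have "r a \<noteq> 0" by auto
  then show ?thesis using r0 a by (simp add: less_le)
qed

end

context cox_setup begin

lemma D3:
  assumes y: "y \<in> Y_hat A" and yre: "\<forall>a\<in>A. Im (y a) = 0 \<and> Re (y a) \<ge> 0" and ynz: "\<exists>a\<in>A. y a \<noteq> 0"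
  shows "\<exists>x\<in>nonneg_orthant A. \<forall>a\<in>A. Re (y a) = mon x a"
proof -
  define r where "r = (\<lambda>a. Re (y a))"
  have yr: "\<forall>a\<in>A. y a = complex_of_real (r a)" using yre by (auto simp: r_def complex_eq_iff)
  have r0: "\<forall>a\<in>A. r a \<ge> 0" using yre by (simp add: r_def)
  define S where "S = {a\<in>A. r a > 0}"
  have SA: "S \<subseteq> A" and Spos: "\<forall>s\<in>S. r s > 0" by (auto simp: S_def)
  have Sne: "S \<noteq> {}"
  proof -
    obtain a0 where a0: "a0 \<in> A" "y a0 \<noteq> 0" using ynz by blast
    then have "r a0 \<noteq> 0" using yr by auto
    then have "a0 \<in> S" using r0 a0 by (simp add: S_def less_le)
    then show ?thesis by blast
  qed
  define K where "K = {\<rho>\<in>R. \<forall>s\<in>S. e \<rho> (realv s) = 0}"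
  obtain z where z: "\<forall>s\<in>S. ln (r s) = (\<Sum>\<rho>\<in>R. z \<rho> * e \<rho> (realv s))"
    using val_lemma[OF y yr SA Spos] by blast
  define x where "x = (\<lambda>\<rho>. if \<rho> \<in> R then (if \<rho> \<in> K then 0 else exp (z \<rho>)) else 0)"
  have xo: "x \<in> nonneg_orthant A" by (auto simp: nonneg_orthant_def x_def)
  have "r a = mon x a" if a: "a \<in> A" for a
  proof (cases "r a > 0")
    case True
    then have aS: "a \<in> S" using a by (simp add: S_def)
    have fac: "x \<rho> ^ nat (idot (F \<rho>) a + b \<rho>) = exp (z \<rho> * e \<rho> (realv a))" if r: "\<rho> \<in> R" for \<rho>
    proof (cases "\<rho> \<in> K")
      case True
      then have e0: "e \<rho> (realv a) = 0" using aS by (simp add: K_def)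
      then have "idot (F \<rho>) a + b \<rho> = 0" by (simp add: e_realv)
      then show ?thesis using e0 by simp
    next
      case False
      have k: "0 \<le> idot (F \<rho>) a + b \<rho>" by (rule e_nonneg_int[OF a r])
      have "x \<rho> ^ nat (idot (F \<rho>) a + b \<rho>) = exp (z \<rho>) ^ nat (idot (F \<rho>) a + b \<rho>)"
        using r False by (simp add: x_def)
      also have "\<dots> = exp (real (nat (idot (F \<rho>) a + b \<rho>)) * z \<rho>)" by (simp add: exp_of_nat_mult)
      also have "real (nat (idot (F \<rho>) a + b \<rho>)) = e \<rho> (realv a)" using k by (simp add: e_realv)
      finally show ?thesis by (simp add: mult.commute)
    qed
    have "mon x a = (\<Prod>\<rho>\<in>R. exp (z \<rho> * e \<rho> (realv a)))"
      unfolding mon_def by (rule prod.cong[OF refl]) (rule fac)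
    also have "\<dots> = exp (\<Sum>\<rho>\<in>R. z \<rho> * e \<rho> (realv a))" using finR by (simp add: exp_sum)
    also have "\<dots> = exp (ln (r a))" using z aS by simp
    also have "\<dots> = r a" using True by simp
    finally show ?thesis by simp
  next
    case False
    have "0 \<le> r a" using r0 a by blast
    then have ra: "r a = 0" using False by linarith
    have "\<not> (\<forall>\<rho>\<in>R. (\<forall>s\<in>S. e \<rho> (realv s) = 0) \<longrightarrow> e \<rho> (realv a) = 0)"
      using supp_lemma[OF y yr r0 S_def Sne a] False by blast
    then obtain \<rho> where \<rho>: "\<rho> \<in> R" "\<forall>s\<in>S. e \<rho> (realv s) = 0" "e \<rho> (realv a) \<noteq> 0" by blast
    then have "\<rho> \<in> K" by (simp add: K_def)
    then have "x \<rho> = 0" using \<rho>(1) by (simp add: x_def)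
    then have "\<exists>\<rho>\<in>R. x \<rho> = 0 \<and> e \<rho> (realv a) \<noteq> 0" using \<rho>(1,3) by blast
    then have "mon x a = 0" by (subst mon_zero_iff[OF a])
    then show ?thesis using ra by simp
  qed
  then show ?thesis using xo by (intro bexI[of _ x]) (auto simp: r_def)
qed

lemma mon_nonneg: "x \<in> nonneg_orthant A \<Longrightarrow> 0 \<le> mon x a"
  unfolding mon_def nonneg_orthant_def by (auto intro!: prod_nonneg)

lemma Ym_props:
  assumes "x \<in> nonneg_orthant A"
  shows "\<forall>a\<in>A. Im (Ym x a) = 0 \<and> Re (Ym x a) \<ge> 0" "\<forall>a\<in>A. Re (Ym x a) = mon x a"
  using mon_nonneg[OF assms] by (auto simp: Ym_def)

end

theorem mainTheorem9:
  fixes A :: "(int^'n) set" and c :: "int^'n \<Rightarrow> real"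
    and F :: "(real^'n) set \<Rightarrow> int^'n" and b :: "(real^'n) set \<Rightarrow> int"
  assumes "finite A"
    and "aff_dim (convA A) = int CARD('n)"
    and "\<forall>\<rho>\<in>fan_rays A. prim_gen \<rho> (F \<rho>)"
    and "convA A = {p. \<forall>\<rho>\<in>fan_rays A. (\<Sum>i\<in>UNIV. of_int (F \<rho> $ i) * p $ i) + of_int (b \<rho>) \<ge> (0::real)}"
  shows "strictly_A_copositive A c \<longleftrightarrow>
           ((\<forall>x\<in>nonneg_orthant A. f_cox A F b c x \<ge> 0) \<and>
            {x\<in>nonneg_orthant A. f_cox A F b c x = 0} =
            {x\<in>nonneg_orthant A. (\<lambda>\<rho>. complex_of_real (x \<rho>)) \<in> Z_A A})"
proof -
  interpret cox_setup A F b
    using assms by (simp add: cox_setup_def)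
  show ?thesis
  proof
    assume sc: "strictly_A_copositive A c"
    have pos: "f_cox A F b c x > 0" if x: "x \<in> nonneg_orthant A" and nz: "\<exists>a\<in>A. mon x a \<noteq> 0" for x
    proof -
      have yin: "Ym x \<in> Y_hat A" by (rule Ym_in[OF x])
      have "\<exists>a\<in>A. Ym x a \<noteq> 0" using nz by (auto simp: Ym_def)
      then have "(\<Sum>a\<in>A. c a * Re (Ym x a)) > 0"
        using sc yin Ym_props(1)[OF x] unfolding strictly_A_copositive_def by blast
      then show ?thesis using Ym_props(2)[OF x] by (simp add: f_cox_mon)
    qed
    have zero: "f_cox A F b c x = 0" if "\<forall>a\<in>A. mon x a = 0" for x
      using that by (simp add: f_cox_mon)
    have iff0: "f_cox A F b c x = 0 \<longleftrightarrow> (\<forall>a\<in>A. mon x a = 0)" if x: "x \<in> nonneg_orthant A" for x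
      using pos[OF x] zero by force
    show "(\<forall>x\<in>nonneg_orthant A. f_cox A F b c x \<ge> 0) \<and>
            {x\<in>nonneg_orthant A. f_cox A F b c x = 0} =
            {x\<in>nonneg_orthant A. (\<lambda>\<rho>. complex_of_real (x \<rho>)) \<in> Z_A A}"
    proof
      show "\<forall>x\<in>nonneg_orthant A. f_cox A F b c x \<ge> 0"
      proof
        fix x assume x: "x \<in> nonneg_orthant A"
        show "f_cox A F b c x \<ge> 0"
        proof (cases "\<exists>a\<in>A. mon x a \<noteq> 0")
          case True then show ?thesis using pos[OF x] by (simp add: less_imp_le)
        next
          case False then show ?thesis using zero by simp
        qed
      qed
      show "{x\<in>nonneg_orthant A. f_cox A F b c x = 0} =
            {x\<in>nonneg_orthant A. (\<lambda>\<rho>. complex_of_real (x \<rho>)) \<in> Z_A A}"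
        using iff0 ZA_iff by blast
    qed
  next
    assume h: "(\<forall>x\<in>nonneg_orthant A. f_cox A F b c x \<ge> 0) \<and>
            {x\<in>nonneg_orthant A. f_cox A F b c x = 0} =
            {x\<in>nonneg_orthant A. (\<lambda>\<rho>. complex_of_real (x \<rho>)) \<in> Z_A A}"
    show "strictly_A_copositive A c"
      unfolding strictly_A_copositive_def
    proof (intro ballI impI)
      fix y assume y: "y \<in> Y_hat A"
        and cond: "(\<forall>a\<in>A. Im (y a) = 0 \<and> Re (y a) \<ge> 0) \<and> (\<exists>a\<in>A. y a \<noteq> 0)"
      obtain x where x: "x \<in> nonneg_orthant A" "\<forall>a\<in>A. Re (y a) = mon x a"
        using D3[OF y] cond by blast
      have fx: "(\<Sum>a\<in>A. c a * Re (y a)) = f_cox A F b c x"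
        using x(2) by (simp add: f_cox_mon)
      obtain a0 where a0: "a0 \<in> A" "y a0 \<noteq> 0" using cond by blast
      have "Re (y a0) \<noteq> 0" using a0 cond complex_eqI[of "y a0" 0] by auto
      then have "mon x a0 \<noteq> 0" using x(2) a0(1) by simp
      then have "\<not> (\<forall>a\<in>A. mon x a = 0)" using a0(1) by blast
      then have "(\<lambda>\<rho>. complex_of_real (x \<rho>)) \<notin> Z_A A" using ZA_iff by blast
      then have "x \<notin> {x\<in>nonneg_orthant A. f_cox A F b c x = 0}" using h by blast
      then have "f_cox A F b c x \<noteq> 0" using x(1) by blast
      moreover have "f_cox A F b c x \<ge> 0" using h x(1) by blast
      ultimately show "(\<Sum>a\<in>A. c a * Re (y a)) > 0" using fx by simp
    qed
  qed
qed

end
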